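(* Every $GF(2)$-chordal matroid is a chordal matroid.
   Context: All matroids are simple. For matroids $M_1,M_2$ whose ground sets meet in a set $T$ that is a modular flat of $M_1$ with $M_1|T=M_2|T=N$, the generalized parallel connection $P_N(M_1,M_2)$ is the matroid on $E(M_1)\cup E(M_2)$ whose flats are the sets $Z$ with $Z\cap E(M_i)$ a flat of $M_i$ for $i=1,2$ (if $T=\emptyset$ this is $M_1\oplus M_2$). A matroid is $GF(2)$-chordal if it can be built from binary projective geometries by a sequence of generalized parallel connections across binary projective geometries. A matroid $M$ is chordal if, for each circuit $C$ of $M$ with at least four elements, there are circuits $C_1$ and $C_2$ and an element $e$ such that $C_1\cap C_2=\{e\}$ and $C=(C_1\cup C_2)-e$. *)

theory Defs
  imports Main
begin

type_synonym 'a matroid = "'a set \<times> 'a set set"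

definition gnd :: "'a matroid \<Rightarrow> 'a set" where "gnd M = fst M"
definition indep :: "'a matroid \<Rightarrow> 'a set set" where "indep M = snd M"

definition matroid :: "'a matroid \<Rightarrow> bool" where
  "matroid M \<longleftrightarrow> finite (gnd M) \<and> (\<forall>I\<in>indep M. I \<subseteq> gnd M) \<and> {} \<in> indep M
     \<and> (\<forall>I J. I \<in> indep M \<and> J \<subseteq> I \<longrightarrow> J \<in> indep M)
     \<and> (\<forall>I J. I \<in> indep M \<and> J \<in> indep M \<and> card I < card J \<longrightarrow>
            (\<exists>e\<in>J - I. insert e I \<in> indep M))"

definition rk :: "'a matroid \<Rightarrow> 'a set \<Rightarrow> nat" where
  "rk M X = Max {card I | I. I \<in> indep M \<and> I \<subseteq> X}"

definition cl :: "'a matroid \<Rightarrow> 'a set \<Rightarrow> 'a set" where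
  "cl M X = {e \<in> gnd M. rk M (insert e X) = rk M X}"

definition flat :: "'a matroid \<Rightarrow> 'a set \<Rightarrow> bool" where
  "flat M X \<longleftrightarrow> X \<subseteq> gnd M \<and> cl M X = X"

definition modular_flat :: "'a matroid \<Rightarrow> 'a set \<Rightarrow> bool" where
  "modular_flat M X \<longleftrightarrow> flat M X \<and>
     (\<forall>Y. flat M Y \<longrightarrow> rk M X + rk M Y = rk M (X \<union> Y) + rk M (X \<inter> Y))"

definition circuit :: "'a matroid \<Rightarrow> 'a set \<Rightarrow> bool" where
  "circuit M C \<longleftrightarrow> C \<subseteq> gnd M \<and> C \<notin> indep M \<and> (\<forall>D. D \<subset> C \<longrightarrow> D \<in> indep M)"

definition simple :: "'a matroid \<Rightarrow> bool" where
  "simple M \<longleftrightarrow> matroid M \<and> (\<forall>C. circuit M C \<longrightarrow> card C \<ge> 3)"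

definition restr :: "'a matroid \<Rightarrow> 'a set \<Rightarrow> 'a matroid" where
  "restr M T = (T, {I \<in> indep M. I \<subseteq> T})"

text \<open>The binary projective geometry of rank r: the vector matroid of all nonzero vectors of
  GF(2)^r.  A vector is encoded as its support, a subset of {..<r}; vector addition is symmetric
  difference, so a family G of vectors sums to zero iff every coordinate lies in an even number
  of members of G.\<close>
definition pg_ground :: "nat \<Rightarrow> nat set set" where
  "pg_ground r = {S. S \<subseteq> {..<r} \<and> S \<noteq> {}}"

definition gf2_lin_indep :: "nat set set \<Rightarrow> bool" where
  "gf2_lin_indep F \<longleftrightarrow> (\<forall>G. G \<subseteq> F \<and> G \<noteq> {} \<longrightarrow> \<not> (\<forall>i. even (card {S \<in> G. i \<in> S})))"

definition PG2 :: "nat \<Rightarrow> nat set matroid" where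
  "PG2 r = (pg_ground r, {F. F \<subseteq> pg_ground r \<and> gf2_lin_indep F})"

definition iso :: "'a matroid \<Rightarrow> 'b matroid \<Rightarrow> bool" where
  "iso M M' \<longleftrightarrow> (\<exists>f. bij_betw f (gnd M) (gnd M') \<and> indep M' = (\<lambda>I. f ` I) ` indep M)"

definition binary_pg :: "'a matroid \<Rightarrow> bool" where
  "binary_pg M \<longleftrightarrow> matroid M \<and> (\<exists>r. iso M (PG2 r))"

text \<open>M is the generalized parallel connection of M1 and M2 (across the common restriction to
  the intersection of the ground sets): M lives on the union of the ground sets and its flats are
  exactly the sets Z whose intersection with each ground set is a flat of the corresponding matroid.\<close>
definition is_gpc :: "'a matroid \<Rightarrow> 'a matroid \<Rightarrow> 'a matroid \<Rightarrow> bool" where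
  "is_gpc M1 M2 M \<longleftrightarrow> matroid M \<and> gnd M = gnd M1 \<union> gnd M2 \<and>
     (\<forall>Z. flat M Z \<longleftrightarrow> Z \<subseteq> gnd M \<and> flat M1 (Z \<inter> gnd M1) \<and> flat M2 (Z \<inter> gnd M2))"

inductive gf2_chordal :: "'a matroid \<Rightarrow> bool" where
  base: "binary_pg M \<Longrightarrow> gf2_chordal M"
| glue: "\<lbrakk> gf2_chordal M1; gf2_chordal M2; simple M1; simple M2; binary_pg N;
           gnd M1 \<inter> gnd M2 = gnd N; modular_flat M1 (gnd N);
           restr M1 (gnd N) = N; restr M2 (gnd N) = N; is_gpc M1 M2 M \<rbrakk>
         \<Longrightarrow> gf2_chordal M"

definition chordal :: "'a matroid \<Rightarrow> bool" where
  "chordal M \<longleftrightarrow> (\<forall>C. circuit M C \<and> card C \<ge> 4 \<longrightarrow>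
     (\<exists>C1 C2 e. circuit M C1 \<and> circuit M C2 \<and> C1 \<inter> C2 = {e} \<and> C = (C1 \<union> C2) - {e}))"

end

theory Submission
  imports Defs
begin

section \<open>Basic matroid theory\<close>

lemma matroidD:
  assumes "matroid M"
  shows "finite (gnd M)" "\<And>I. I \<in> indep M \<Longrightarrow> I \<subseteq> gnd M" "{} \<in> indep M"
    "\<And>I J. I \<in> indep M \<Longrightarrow> J \<subseteq> I \<Longrightarrow> J \<in> indep M"
    "\<And>I J. I \<in> indep M \<Longrightarrow> J \<in> indep M \<Longrightarrow> card I < card J \<Longrightarrow> \<exists>e\<in>J - I. insert e I \<in> indep M"
  using assms unfolding matroid_def by blast+

lemma indep_finite: "matroid M \<Longrightarrow> I \<in> indep M \<Longrightarrow> finite I"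
  by (meson finite_subset matroidD(1,2))

lemma rk_set_finite: "matroid M \<Longrightarrow> finite {card I | I. I \<in> indep M \<and> I \<subseteq> X}"
proof -
  assume m: "matroid M"
  have "{card I | I. I \<in> indep M \<and> I \<subseteq> X} \<subseteq> card ` Pow (gnd M)"
    using matroidD(2)[OF m] by blast
  then show ?thesis using matroidD(1)[OF m] by (meson finite_Pow_iff finite_imageI finite_subset)
qed

lemma rk_ge: "matroid M \<Longrightarrow> I \<in> indep M \<Longrightarrow> I \<subseteq> X \<Longrightarrow> card I \<le> rk M X"
  unfolding rk_def by (rule Max_ge[OF rk_set_finite]) auto

lemma rk_basis: assumes m: "matroid M" shows "\<exists>B. B \<subseteq> X \<and> B \<in> indep M \<and> card B = rk M X"
proof -
  let ?S = "{card I | I. I \<in> indep M \<and> I \<subseteq> X}"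
  have "0 \<in> ?S"
    using matroidD(3)[OF m] by (intro CollectI exI[of _ "{}"]) simp
  then have ne: "?S \<noteq> {}" by blast
  have "rk M X \<in> ?S"
    unfolding rk_def by (rule Max_in[OF rk_set_finite[OF m] ne])
  then obtain I where "rk M X = card I" "I \<in> indep M" "I \<subseteq> X" by blast
  then show ?thesis by auto
qed

lemma rk_le_indep: "matroid M \<Longrightarrow> \<exists>I. I \<subseteq> X \<and> I \<in> indep M \<and> rk M X = card I"
  using rk_basis[of M X] by auto

lemma rk_extend:
  assumes m: "matroid M" and I: "I \<in> indep M" "I \<subseteq> X"
  shows "\<exists>B. I \<subseteq> B \<and> B \<subseteq> X \<and> B \<in> indep M \<and> card B = rk M X"
proof -
  have "\<And>I. I \<in> indep M \<Longrightarrow> I \<subseteq> X \<Longrightarrow> rk M X - card I = n \<Longrightarrow> \<exists>B. I \<subseteq> B \<and> B \<subseteq> X \<and> B \<in> indep M \<and> card B = rk M X" for n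
  proof (induction n)
    case 0
    then show ?case using rk_ge[OF m, of I X] by (intro exI[of _ I]) auto
  next
    case (Suc n)
    obtain J where J: "J \<subseteq> X" "J \<in> indep M" "card J = rk M X" using rk_basis[OF m] by blast
    have "card I < card J" using Suc.prems J by linarith
    then obtain e where e: "e \<in> J - I" "insert e I \<in> indep M" using matroidD(5)[OF m Suc.prems(1) J(2)] by blast
    have fin: "finite I" using indep_finite[OF m Suc.prems(1)] .
    have n: "rk M X - card (insert e I) = n" using Suc.prems e fin by auto
    have sub: "insert e I \<subseteq> X" using e J Suc.prems by auto
    obtain B where "insert e I \<subseteq> B" "B \<subseteq> X" "B \<in> indep M" "card B = rk M X"
      using Suc.IH[OF e(2) sub n] by blast
    then show ?case by auto
  qed
  then show ?thesis using I by blast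
qed

lemma rk_mono: "matroid M \<Longrightarrow> X \<subseteq> Y \<Longrightarrow> rk M X \<le> rk M Y"
  by (metis rk_basis rk_ge subset_trans)

lemma rk_le_card: "matroid M \<Longrightarrow> finite X \<Longrightarrow> rk M X \<le> card X"
  by (metis card_mono rk_basis)

lemma rk_indep: "matroid M \<Longrightarrow> I \<in> indep M \<Longrightarrow> rk M I = card I"
  by (meson antisym indep_finite rk_ge rk_le_card subset_refl)

lemma rk_gnd_inter: assumes m: "matroid M" shows "rk M (X \<inter> gnd M) = rk M X"
proof -
  obtain B where B: "B \<subseteq> X" "B \<in> indep M" "card B = rk M X" using rk_basis[OF m] by blast
  have "B \<subseteq> X \<inter> gnd M" using B matroidD(2)[OF m] by blast
  then have "rk M X \<le> rk M (X \<inter> gnd M)" using rk_ge[OF m B(2)] B(3) by simp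
  moreover have "rk M (X \<inter> gnd M) \<le> rk M X" using rk_mono[OF m] by simp
  ultimately show ?thesis by simp
qed

lemma rk_le_gnd: assumes m: "matroid M" shows "rk M X \<le> card (gnd M)"
proof -
  have "rk M X = rk M (X \<inter> gnd M)" using rk_gnd_inter[OF m] by simp
  also have "\<dots> \<le> card (X \<inter> gnd M)" using rk_le_card[OF m] matroidD(1)[OF m] by simp
  also have "\<dots> \<le> card (gnd M)" using matroidD(1)[OF m] by (simp add: card_mono)
  finally show ?thesis .
qed

lemma indep_iff_rk: assumes m: "matroid M" and IE: "I \<subseteq> gnd M" shows "I \<in> indep M \<longleftrightarrow> rk M I = card I"
proof
  assume "rk M I = card I"
  then obtain B where B: "B \<subseteq> I" "B \<in> indep M" "card B = card I" using rk_basis[OF m] by metis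
  have "finite I" using m IE matroidD(1) finite_subset by blast
  then have "B = I" using B card_subset_eq by blast
  then show "I \<in> indep M" using B by simp
next
  assume "I \<in> indep M" then show "rk M I = card I" using rk_indep[OF m] by simp
qed

lemma rk_empty: "matroid M \<Longrightarrow> rk M {} = 0"
  by (metis bot.extremum_uniqueI card.empty rk_basis)

lemma rk_insert: "matroid M \<Longrightarrow> rk M (insert e X) \<le> rk M X + 1"
proof -
  assume m: "matroid M"
  obtain B where B: "B \<subseteq> insert e X" "B \<in> indep M" "card B = rk M (insert e X)" using rk_basis[OF m] by blast
  have "B - {e} \<in> indep M" using matroidD(4)[OF m B(2)] by blast
  moreover have "B - {e} \<subseteq> X" using B by blast
  ultimately have "card (B - {e}) \<le> rk M X" using rk_ge[OF m] by blast
  moreover have "card B \<le> card (B - {e}) + 1" using indep_finite[OF m B(2)]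
    by (cases "e \<in> B") (auto simp: card_Diff_singleton_if)
  ultimately show ?thesis using B by linarith
qed

lemma rk_union_le: assumes m: "matroid M" and f: "finite Y" shows "rk M (X \<union> Y) \<le> rk M X + card Y"
  using f
proof (induction Y rule: finite_induct)
  case empty then show ?case by simp
next
  case (insert y F)
  have "rk M (X \<union> insert y F) = rk M (insert y (X \<union> F))" by simp
  also have "\<dots> \<le> rk M (X \<union> F) + 1" using rk_insert[OF m] .
  finally show ?case using insert by simp
qed

lemma rk_submod:
  assumes m: "matroid M"
  shows "rk M (X \<union> Y) + rk M (X \<inter> Y) \<le> rk M X + rk M Y"
proof -
  obtain B0 where B0: "B0 \<subseteq> X \<inter> Y" "B0 \<in> indep M" "card B0 = rk M (X \<inter> Y)" using rk_basis[OF m] by blast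
  obtain B where B: "B0 \<subseteq> B" "B \<subseteq> X \<union> Y" "B \<in> indep M" "card B = rk M (X \<union> Y)"
    using rk_extend[OF m B0(2), of "X \<union> Y"] B0 by blast
  have fB: "finite B" using indep_finite[OF m B(3)] .
  have iX: "B \<inter> X \<in> indep M" "B \<inter> Y \<in> indep M" "B \<inter> X \<inter> Y \<in> indep M"
    using matroidD(4)[OF m B(3), of "B \<inter> X"] matroidD(4)[OF m B(3), of "B \<inter> Y"] matroidD(4)[OF m B(3), of "B \<inter> X \<inter> Y"] by auto
  have "card (B \<inter> X \<inter> Y) \<le> card B0" using rk_ge[OF m iX(3), of "X \<inter> Y"] B0 by auto
  moreover have "B0 \<subseteq> B \<inter> X \<inter> Y" using B0 B by auto
  ultimately have eq: "B \<inter> X \<inter> Y = B0" using fB by (metis card_seteq finite_Int)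
  have "card B + card B0 = card (B \<inter> X) + card (B \<inter> Y)"
  proof -
    have "B = (B \<inter> X) \<union> (B \<inter> Y)" using B by auto
    then have "card B = card ((B \<inter> X) \<union> (B \<inter> Y))" by simp
    also have "\<dots> + card ((B \<inter> X) \<inter> (B \<inter> Y)) = card (B \<inter> X) + card (B \<inter> Y)"
      using card_Un_Int fB by (metis finite_Int)
    finally show ?thesis using eq by (metis inf.left_commute inf_assoc inf_idem)
  qed
  moreover have "card (B \<inter> X) \<le> rk M X" "card (B \<inter> Y) \<le> rk M Y" using rk_ge[OF m] iX by auto
  ultimately show ?thesis using B B0 by linarith
qed

section \<open>Closure\<close>

lemma cl_sub: "cl M X \<subseteq> gnd M" unfolding cl_def by auto

lemma cl_ext: "X \<subseteq> gnd M \<Longrightarrow> X \<subseteq> cl M X"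
  unfolding cl_def by (auto simp: insert_absorb)

lemma mem_cl: "e \<in> cl M X \<longleftrightarrow> e \<in> gnd M \<and> rk M (insert e X) = rk M X"
  unfolding cl_def by auto

lemma cl_mono:
  assumes m: "matroid M" and XY: "X \<subseteq> Y"
  shows "cl M X \<subseteq> cl M Y"
proof
  fix e assume e: "e \<in> cl M X"
  have eq: "insert e X \<union> Y = insert e Y" using XY by auto
  have "rk M (insert e Y) + rk M (insert e X \<inter> Y) \<le> rk M (insert e X) + rk M Y"
    using rk_submod[OF m, of "insert e X" Y] eq by simp
  moreover have "rk M X \<le> rk M (insert e X \<inter> Y)" using rk_mono[OF m, of X "insert e X \<inter> Y"] XY by auto
  moreover have "rk M Y \<le> rk M (insert e Y)" using rk_mono[OF m, of Y "insert e Y"] by auto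
  ultimately show "e \<in> cl M Y" using e unfolding mem_cl by linarith
qed

lemma rk_cl: assumes m: "matroid M" shows "rk M (cl M X) = rk M X"
proof -
  obtain B0 where B0: "B0 \<subseteq> X" "B0 \<in> indep M" "card B0 = rk M X" using rk_basis[OF m] by blast
  obtain B where B: "B0 \<subseteq> B" "B \<subseteq> X \<union> cl M X" "B \<in> indep M" "card B = rk M (X \<union> cl M X)"
    using rk_extend[OF m B0(2), of "X \<union> cl M X"] B0 by blast
  have fB: "finite B" using indep_finite[OF m B(3)] .
  have "B \<inter> X \<in> indep M" using matroidD(4)[OF m B(3)] by auto
  then have "card (B \<inter> X) \<le> card B0" using rk_ge[OF m, of "B \<inter> X" X] B0 by auto
  moreover have "B0 \<subseteq> B \<inter> X" using B0 B by auto
  ultimately have eq: "B \<inter> X = B0" using fB by (metis card_seteq finite_Int)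
  have "B \<subseteq> X"
  proof
    fix e assume eB: "e \<in> B"
    show "e \<in> X"
    proof (rule ccontr)
      assume "e \<notin> X"
      then have ec: "e \<in> cl M X" using eB B by auto
      have "insert e B0 \<subseteq> B" using eB B by auto
      then have "insert e B0 \<in> indep M" using matroidD(4)[OF m B(3)] by auto
      moreover have "insert e B0 \<subseteq> insert e X" using B0 by auto
      ultimately have "card (insert e B0) \<le> rk M (insert e X)" using rk_ge[OF m] by blast
      moreover have "e \<notin> B0" using \<open>e \<notin> X\<close> B0 by auto
      ultimately show False using ec B0 indep_finite[OF m B0(2)] unfolding mem_cl by auto
    qed
  qed
  then have "card B \<le> rk M X" using rk_ge[OF m B(3)] by blast
  then have "rk M (X \<union> cl M X) \<le> rk M X" using B by simp
  moreover have "rk M (cl M X) \<le> rk M (X \<union> cl M X)" "rk M X \<le> rk M (X \<union> cl M X)" using rk_mono[OF m] by auto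
  moreover have "rk M (X \<inter> gnd M) \<le> rk M (cl M X)"
    using rk_mono[OF m] cl_mono[OF m, of "X \<inter> gnd M" X] cl_ext[of "X \<inter> gnd M" M] by (meson inf_le1 inf_le2 order_trans)
  ultimately show ?thesis using rk_gnd_inter[OF m] by (metis antisym le_trans)
qed

lemma cl_idem: assumes m: "matroid M" shows "cl M (cl M X) = cl M X"
proof
  show "cl M X \<subseteq> cl M (cl M X)" using cl_ext[OF cl_sub] .
  show "cl M (cl M X) \<subseteq> cl M X"
  proof
    fix e assume e: "e \<in> cl M (cl M X)"
    have "rk M (insert e X \<union> cl M X) + rk M (insert e X \<inter> cl M X) \<le> rk M (insert e X) + rk M (cl M X)"
      using rk_submod[OF m] .
    have "rk M (insert e X) \<le> rk M (insert e (cl M X \<union> X))" using rk_mono[OF m, of "insert e X" "insert e (cl M X \<union> X)"] by auto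
    also have "\<dots> = rk M (cl M (insert e (cl M X \<union> X)))" using rk_cl[OF m] by simp
    also have "cl M (insert e (cl M X \<union> X)) \<subseteq> cl M (insert e (cl M X))"
    proof -
      have "insert e (cl M X \<union> X) \<inter> gnd M \<subseteq> insert e (cl M X)" using cl_ext[of "X \<inter> gnd M" M] cl_mono[OF m, of "X \<inter> gnd M" X] by auto
      have "cl M (insert e (cl M X \<union> X)) = cl M (insert e (cl M X \<union> X) \<inter> gnd M)"
        unfolding cl_def using rk_gnd_inter[OF m] by (metis (no_types, lifting) Int_insert_left_if1 Int_insert_left_if0)
      then show ?thesis using cl_mono[OF m] \<open>insert e (cl M X \<union> X) \<inter> gnd M \<subseteq> insert e (cl M X)\<close> by metis
    qed
    then have "rk M (cl M (insert e (cl M X \<union> X))) \<le> rk M (cl M (insert e (cl M X)))" using rk_mono[OF m] by blast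
    also have "\<dots> = rk M (insert e (cl M X))" using rk_cl[OF m] by simp
    also have "\<dots> = rk M (cl M X)" using e unfolding mem_cl by simp
    also have "\<dots> = rk M X" using rk_cl[OF m] .
    finally have "rk M (insert e X) \<le> rk M X" .
    moreover have "rk M X \<le> rk M (insert e X)" using rk_mono[OF m] by (meson subset_insertI)
    ultimately show "e \<in> cl M X" using e cl_sub unfolding mem_cl by (metis antisym subsetD)
  qed
qed

lemma flat_cl: "matroid M \<Longrightarrow> flat M (cl M X)"
  unfolding flat_def using cl_sub[of M X] cl_idem[of M X] by simp

lemma flat_gnd: "matroid M \<Longrightarrow> flat M (gnd M)"
  unfolding flat_def using cl_sub[of M "gnd M"] cl_ext[of "gnd M" M] by simp

lemma flat_sub: "flat M F \<Longrightarrow> F \<subseteq> gnd M" unfolding flat_def by blast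
lemma flat_cl_eq: "flat M F \<Longrightarrow> cl M F = F" unfolding flat_def by blast

lemma cl_least: "matroid M \<Longrightarrow> flat M F \<Longrightarrow> X \<subseteq> F \<Longrightarrow> cl M X \<subseteq> F"
  unfolding flat_def using cl_mono[of M X F] by auto

lemma flat_Int: "matroid M \<Longrightarrow> flat M F \<Longrightarrow> flat M G \<Longrightarrow> flat M (F \<inter> G)"
proof -
  assume m: "matroid M" and F: "flat M F" and G: "flat M G"
  have "cl M (F \<inter> G) \<subseteq> F \<inter> G" using cl_least[OF m F, of "F \<inter> G"] cl_least[OF m G, of "F \<inter> G"] by auto
  moreover have "F \<inter> G \<subseteq> cl M (F \<inter> G)" using cl_ext[of "F \<inter> G" M] F unfolding flat_def by auto
  ultimately show ?thesis using F unfolding flat_def by auto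
qed

lemma cl_gnd_inter: "matroid M \<Longrightarrow> cl M (X \<inter> gnd M) = cl M X"
proof -
  assume m: "matroid M"
  have "rk M (insert e (X \<inter> gnd M)) = rk M (insert e X)" if "e \<in> gnd M" for e
  proof -
    have "insert e (X \<inter> gnd M) = insert e X \<inter> gnd M" using that by auto
    then show ?thesis using rk_gnd_inter[OF m, of "insert e X"] by simp
  qed
  then show ?thesis unfolding cl_def using rk_gnd_inter[OF m, of X] by (intro Collect_cong conj_cong refl) auto
qed

lemma X_sub_cl: "matroid M \<Longrightarrow> X \<inter> gnd M \<subseteq> cl M X"
  using cl_ext[of "X \<inter> gnd M" M] cl_gnd_inter by (metis inf_le2)

lemma cl_union_cl: assumes m: "matroid M" shows "cl M (cl M X \<union> Y) = cl M (X \<union> Y)"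
proof
  have "(X \<union> Y) \<inter> gnd M \<subseteq> cl M X \<union> Y" using X_sub_cl[OF m, of X] by auto
  then have "cl M ((X \<union> Y) \<inter> gnd M) \<subseteq> cl M (cl M X \<union> Y)" using cl_mono[OF m] by blast
  then show "cl M (X \<union> Y) \<subseteq> cl M (cl M X \<union> Y)" using cl_gnd_inter[OF m, of "X \<union> Y"] by simp
next
  have "cl M X \<subseteq> cl M (X \<union> Y)" using cl_mono[OF m, of X "X \<union> Y"] by auto
  moreover have "Y \<inter> gnd M \<subseteq> cl M (X \<union> Y)" using X_sub_cl[OF m, of "X \<union> Y"] by auto
  ultimately have "(cl M X \<union> Y) \<inter> gnd M \<subseteq> cl M (X \<union> Y)" using cl_sub by blast
  then have "cl M ((cl M X \<union> Y) \<inter> gnd M) \<subseteq> cl M (X \<union> Y)"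
    using cl_least[OF m flat_cl[OF m]] by blast
  then show "cl M (cl M X \<union> Y) \<subseteq> cl M (X \<union> Y)" using cl_gnd_inter[OF m, of "cl M X \<union> Y"] by simp
qed

lemma rk_union_cl: assumes m: "matroid M" shows "rk M (cl M X \<union> Y) = rk M (X \<union> Y)"
  using rk_cl[OF m, of "cl M X \<union> Y"] rk_cl[OF m, of "X \<union> Y"] cl_union_cl[OF m] by simp

lemma rk_eq_sub_cl:
  assumes m: "matroid M" and "X \<subseteq> S" "S \<subseteq> gnd M" "rk M S \<le> rk M X"
  shows "S \<subseteq> cl M X"
proof
  fix e assume "e \<in> S"
  then have "rk M (insert e X) \<le> rk M S" using rk_mono[OF m, of "insert e X" S] assms by auto
  moreover have "rk M X \<le> rk M (insert e X)" using rk_mono[OF m, of X "insert e X"] by auto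
  ultimately show "e \<in> cl M X" using assms \<open>e \<in> S\<close> unfolding mem_cl by auto
qed

lemma indep_insert_iff:
  assumes m: "matroid M" and I: "I \<in> indep M" and e: "e \<in> gnd M" "e \<notin> I"
  shows "insert e I \<in> indep M \<longleftrightarrow> e \<notin> cl M I"
proof -
  have fI: "finite I" using indep_finite[OF m I] .
  have sub: "insert e I \<subseteq> gnd M" using matroidD(2)[OF m I] e by auto
  have c: "card (insert e I) = card I + 1" using fI e by simp
  have rI: "rk M I = card I" using rk_indep[OF m I] .
  have "insert e I \<in> indep M \<longleftrightarrow> rk M (insert e I) = card I + 1"
    using indep_iff_rk[OF m sub] c by simp
  moreover have "rk M (insert e I) \<le> card I + 1" using rk_insert[OF m, of e I] rI by simp
  moreover have "rk M I \<le> rk M (insert e I)" using rk_mono[OF m, of I "insert e I"] by auto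
  ultimately show ?thesis unfolding mem_cl using e rI by auto
qed

lemma indep_iff_cl:
  assumes m: "matroid M" and IE: "I \<subseteq> gnd M"
  shows "I \<in> indep M \<longleftrightarrow> (\<forall>x\<in>I. x \<notin> cl M (I - {x}))"
proof
  assume I: "I \<in> indep M"
  show "\<forall>x\<in>I. x \<notin> cl M (I - {x})"
  proof
    fix x assume x: "x \<in> I"
    have "I - {x} \<in> indep M" using matroidD(4)[OF m I] by blast
    moreover have "insert x (I - {x}) = I" using x by auto
    ultimately show "x \<notin> cl M (I - {x})" using indep_insert_iff[OF m, of "I - {x}" x] I IE x by auto
  qed
next
  assume H: "\<forall>x\<in>I. x \<notin> cl M (I - {x})"
  show "I \<in> indep M"
  proof (rule ccontr)
    assume nI: "I \<notin> indep M"
    obtain B where B: "B \<subseteq> I" "B \<in> indep M" "card B = rk M I" using rk_basis[OF m] by blast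
    have "B \<noteq> I" using nI B by auto
    then obtain x where x: "x \<in> I" "x \<notin> B" using B by auto
    have "insert x B \<subseteq> I" using x B by auto
    then have "insert x B \<notin> indep M"
      using rk_ge[OF m, of "insert x B" I] B x indep_finite[OF m B(2)] by auto
    then have "x \<in> cl M B" using indep_insert_iff[OF m B(2), of x] x IE by auto
    moreover have "cl M B \<subseteq> cl M (I - {x})" using cl_mono[OF m, of B "I - {x}"] B x by auto
    ultimately show False using H x by auto
  qed
qed

section \<open>Circuits\<close>

lemma circuitD:
  assumes "circuit M C"
  shows "C \<subseteq> gnd M" "C \<notin> indep M" "\<And>D. D \<subset> C \<Longrightarrow> D \<in> indep M"
  using assms unfolding circuit_def by auto

lemma circuit_finite: "matroid M \<Longrightarrow> circuit M C \<Longrightarrow> finite C"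
  using circuitD(1)[of M C] matroidD(1)[of M] finite_subset by blast

lemma circuit_ne: "matroid M \<Longrightarrow> circuit M C \<Longrightarrow> C \<noteq> {}"
  using circuitD(2) matroidD(3) by blast

lemma circuit_in_cl:
  assumes m: "matroid M" and C: "circuit M C" and x: "x \<in> C"
  shows "x \<in> cl M (C - {x})"
proof -
  have "C - {x} \<in> indep M" using circuitD(3)[OF C] x by blast
  moreover have "insert x (C - {x}) = C" using x by auto
  ultimately show ?thesis using indep_insert_iff[OF m, of "C - {x}" x] circuitD[OF C] x by auto
qed

lemma circuit_sub_eq:
  assumes "circuit M C" "circuit M D" "D \<subseteq> C" shows "D = C"
  using assms unfolding circuit_def by blast

lemma dep_has_circuit:
  assumes m: "matroid M" and X: "X \<subseteq> gnd M" "X \<notin> indep M"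
  shows "\<exists>C. C \<subseteq> X \<and> circuit M C"
proof -
  have fX: "finite X" using X matroidD(1)[OF m] finite_subset by blast
  have "\<And>X. finite X \<Longrightarrow> card X = n \<Longrightarrow> X \<subseteq> gnd M \<Longrightarrow> X \<notin> indep M \<Longrightarrow> \<exists>C. C \<subseteq> X \<and> circuit M C" for n
  proof (induction n rule: less_induct)
    case (less n)
    show ?case
    proof (cases "\<forall>D. D \<subset> X \<longrightarrow> D \<in> indep M")
      case True
      then have "circuit M X" using less.prems unfolding circuit_def by auto
      then show ?thesis by auto
    next
      case False
      then obtain D where D: "D \<subset> X" "D \<notin> indep M" by auto
      have "card D < n" using D less.prems psubset_card_mono by blast
      have "finite D" "D \<subseteq> gnd M" using D less.prems finite_subset by auto
      then obtain C where "C \<subseteq> D" "circuit M C"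
        using less.IH[of "card D" D] D \<open>card D < n\<close> by blast
      then show ?thesis using D by auto
    qed
  qed
  then show ?thesis using fX X by blast
qed

lemma circuit_rk:
  assumes m: "matroid M" and C: "circuit M C"
  shows "rk M C + 1 = card C"
proof -
  have fC: "finite C" using circuit_finite[OF m C] .
  obtain x where x: "x \<in> C" using circuit_ne[OF m C] by blast
  have "C - {x} \<in> indep M" using circuitD(3)[OF C] x by blast
  then have "card (C - {x}) \<le> rk M C" using rk_ge[OF m] by blast
  moreover have "card (C - {x}) + 1 = card C" using fC x card_gt_0_iff[of C]
    by (auto simp: card_Diff_singleton)
  moreover have "rk M C \<noteq> card C" using indep_iff_rk[OF m circuitD(1)[OF C]] circuitD(2)[OF C] by blast
  moreover have "rk M C \<le> card C" using rk_le_card[OF m fC] .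
  ultimately show ?thesis by linarith
qed

lemma circuit_elim:
  assumes m: "matroid M" and C1: "circuit M C1" and C2: "circuit M C2" and ne: "C1 \<noteq> C2"
    and e: "e \<in> C1 \<inter> C2"
  shows "\<exists>C. C \<subseteq> (C1 \<union> C2) - {e} \<and> circuit M C"
proof -
  have f1: "finite C1" "finite C2" using circuit_finite[OF m] C1 C2 by auto
  have "\<not> C1 \<subseteq> C2" using circuit_sub_eq[OF C2 C1] ne by auto
  then have "C1 \<inter> C2 \<subset> C1" by auto
  then have "C1 \<inter> C2 \<in> indep M" using circuitD(3)[OF C1] by blast
  then have ri: "rk M (C1 \<inter> C2) = card (C1 \<inter> C2)" using rk_indep[OF m] by blast
  have sm: "rk M (C1 \<union> C2) + rk M (C1 \<inter> C2) \<le> rk M C1 + rk M C2" using rk_submod[OF m] .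
  have cu: "card (C1 \<union> C2) + card (C1 \<inter> C2) = card C1 + card C2" using card_Un_Int[OF f1] by simp
  have r1: "rk M C1 + 1 = card C1" "rk M C2 + 1 = card C2" using circuit_rk[OF m] C1 C2 by auto
  have "rk M (C1 \<union> C2 - {e}) \<le> rk M (C1 \<union> C2)" using rk_mono[OF m] by blast
  moreover have "card (C1 \<union> C2 - {e}) + 1 = card (C1 \<union> C2)"
  proof -
    have "finite (C1 \<union> C2)" "e \<in> C1 \<union> C2" using e f1 by auto
    then show ?thesis using card_gt_0_iff[of "C1 \<union> C2"] by (auto simp: card_Diff_singleton)
  qed
  ultimately have "rk M (C1 \<union> C2 - {e}) \<noteq> card (C1 \<union> C2 - {e})" using sm cu r1 ri by linarith
  moreover have sub: "C1 \<union> C2 - {e} \<subseteq> gnd M" using circuitD(1) C1 C2 by blast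
  ultimately have "C1 \<union> C2 - {e} \<notin> indep M" using indep_iff_rk[OF m sub] by blast
  then show ?thesis using dep_has_circuit[OF m sub] by blast
qed

lemma basis_cl:
  assumes m: "matroid M" and "B \<subseteq> F" "F \<subseteq> gnd M" "B \<in> indep M" "card B = rk M F"
  shows "F \<subseteq> cl M B"
  using rk_eq_sub_cl[OF m, of B F] assms rk_indep[OF m] by auto

section \<open>Isomorphisms\<close>

locale isom =
  fixes M :: "'a matroid" and M' :: "'b matroid" and f :: "'a \<Rightarrow> 'b"
  assumes m: "matroid M" and bij: "bij_betw f (gnd M) (gnd M')"
    and ind: "indep M' = (\<lambda>I. f ` I) ` indep M"
begin

lemma inj: "inj_on f (gnd M)" using bij_betw_imp_inj_on[OF bij] .
lemma img: "f ` gnd M = gnd M'" using bij_betw_imp_surj_on[OF bij] .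

lemma indep_img: "I \<subseteq> gnd M \<Longrightarrow> f ` I \<in> indep M' \<longleftrightarrow> I \<in> indep M"
proof
  assume I: "I \<subseteq> gnd M" and "f ` I \<in> indep M'"
  then obtain J where J: "J \<in> indep M" "f ` I = f ` J" using ind by auto
  have "J \<subseteq> gnd M" using matroidD(2)[OF m J(1)] .
  then have "I = J" using inj_on_image_eq_iff[OF inj I(1) \<open>J \<subseteq> gnd M\<close>] J by simp
  then show "I \<in> indep M" using J by simp
next
  assume "I \<in> indep M" then show "f ` I \<in> indep M'" using ind by auto
qed

lemma indep'_sub: "I' \<in> indep M' \<Longrightarrow> \<exists>I. I \<in> indep M \<and> I' = f ` I"
  using ind by auto

lemma pre: "X' \<subseteq> gnd M' \<Longrightarrow> \<exists>X. X \<subseteq> gnd M \<and> X' = f ` X"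
proof -
  assume "X' \<subseteq> gnd M'"
  then have "X' \<subseteq> f ` gnd M" using img by simp
  then have "X' = f ` {x \<in> gnd M. f x \<in> X'}"
  proof (intro subset_antisym subsetI)
    fix y assume "X' \<subseteq> f ` gnd M" "y \<in> X'"
    then obtain x where x: "x \<in> gnd M" "y = f x" by blast
    then show "y \<in> f ` {x \<in> gnd M. f x \<in> X'}" using \<open>y \<in> X'\<close> by (intro image_eqI[of y f x]) auto
  qed auto
  then show ?thesis by (intro exI[of _ "{x \<in> gnd M. f x \<in> X'}"] conjI) auto
qed

lemma card_img: "X \<subseteq> gnd M \<Longrightarrow> card (f ` X) = card X"
  by (rule card_image[OF inj_on_subset[OF inj]])

lemma sub_img: assumes X: "X \<subseteq> gnd M" and Y: "Y \<subseteq> gnd M" shows "f ` X \<subseteq> f ` Y \<longleftrightarrow> X \<subseteq> Y"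
proof
  assume H: "f ` X \<subseteq> f ` Y"
  show "X \<subseteq> Y"
  proof
    fix x assume x: "x \<in> X"
    then obtain y where y: "y \<in> Y" "f x = f y" using H by blast
    have "x = y" using inj_onD[OF inj y(2)] x y X Y by blast
    then show "x \<in> Y" using y by simp
  qed
next
  assume "X \<subseteq> Y" then show "f ` X \<subseteq> f ` Y" by (rule image_mono)
qed

lemma matroid': "matroid M'"
proof -
  have 1: "finite (gnd M')" using img matroidD(1)[OF m] by (metis finite_imageI)
  have 2: "\<forall>I\<in>indep M'. I \<subseteq> gnd M'"
  proof
    fix I' assume "I' \<in> indep M'"
    then obtain I where I: "I \<in> indep M" "I' = f ` I" using ind by auto
    have "f ` I \<subseteq> f ` gnd M" using matroidD(2)[OF m I(1)] by (rule image_mono)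
    then show "I' \<subseteq> gnd M'" using I img by simp
  qed
  have 3: "{} \<in> indep M'" using ind matroidD(3)[OF m] by (simp add: rev_image_eqI)
  have 4: "\<forall>I J. I \<in> indep M' \<and> J \<subseteq> I \<longrightarrow> J \<in> indep M'"
  proof (intro allI impI)
    fix I' J' assume H: "I' \<in> indep M' \<and> J' \<subseteq> I'"
    then obtain I where I: "I \<in> indep M" "I' = f ` I" using ind by auto
    let ?J = "{x \<in> I. f x \<in> J'}"
    have "J' = f ` ?J" using H I by auto
    moreover have "?J \<in> indep M" using matroidD(4)[OF m I(1)] by auto
    ultimately show "J' \<in> indep M'" using ind by auto
  qed
  have 5: "\<forall>I J. I \<in> indep M' \<and> J \<in> indep M' \<and> card I < card J \<longrightarrow> (\<exists>e\<in>J - I. insert e I \<in> indep M')"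
  proof (intro allI impI)
    fix I' J' assume H: "I' \<in> indep M' \<and> J' \<in> indep M' \<and> card I' < card J'"
    then obtain I J where I: "I \<in> indep M" "I' = f ` I" and J: "J \<in> indep M" "J' = f ` J" using ind by auto
    have sI: "I \<subseteq> gnd M" "J \<subseteq> gnd M" using matroidD(2)[OF m] I J by auto
    have "card I < card J" using H I J card_img sI by simp
    then obtain e where e: "e \<in> J - I" "insert e I \<in> indep M" using matroidD(5)[OF m I(1) J(1)] by blast
    have "e \<in> gnd M" using e sI by auto
    then have "f e \<notin> f ` I" using e inj sI by (meson DiffD2 inj_on_image_mem_iff)
    moreover have "f ` insert e I \<in> indep M'" unfolding ind using e(2) by (rule imageI)
    ultimately show "\<exists>e\<in>J' - I'. insert e I' \<in> indep M'" using e I J by auto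
  qed
  show ?thesis unfolding matroid_def using 1 2 3 4 5 by blast
qed

lemma rk_img: assumes X: "X \<subseteq> gnd M" shows "rk M' (f ` X) = rk M X"
proof -
  have "{card I' | I'. I' \<in> indep M' \<and> I' \<subseteq> f ` X} = {card I | I. I \<in> indep M \<and> I \<subseteq> X}"
  proof (intro set_eqI iffI)
    fix n assume "n \<in> {card I' | I'. I' \<in> indep M' \<and> I' \<subseteq> f ` X}"
    then obtain I' where I': "n = card I'" "I' \<in> indep M'" "I' \<subseteq> f ` X" by blast
    then obtain I where I: "I \<in> indep M" "I' = f ` I" using ind by auto
    have sI: "I \<subseteq> gnd M" using matroidD(2)[OF m I(1)] .
    have "I \<subseteq> X" using sub_img[OF sI X] I I' by simp
    moreover have "n = card I" using I I' card_img[OF sI] by simp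
    ultimately show "n \<in> {card I | I. I \<in> indep M \<and> I \<subseteq> X}" using I by blast
  next
    fix n assume "n \<in> {card I | I. I \<in> indep M \<and> I \<subseteq> X}"
    then obtain I where I: "n = card I" "I \<in> indep M" "I \<subseteq> X" by blast
    have sI: "I \<subseteq> gnd M" using matroidD(2)[OF m I(2)] .
    have "f ` I \<in> indep M'" using ind I by auto
    moreover have "f ` I \<subseteq> f ` X" using I by auto
    moreover have "n = card (f ` I)" using I card_img[OF sI] by simp
    ultimately show "n \<in> {card I' | I'. I' \<in> indep M' \<and> I' \<subseteq> f ` X}" by blast
  qed
  then show ?thesis unfolding rk_def by simp
qed

lemma cl_img: assumes X: "X \<subseteq> gnd M" shows "cl M' (f ` X) = f ` (cl M X)"
proof (intro set_eqI iffI)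
  fix y assume y: "y \<in> cl M' (f ` X)"
  then obtain e where e: "e \<in> gnd M" "y = f e" using img cl_sub[of M' "f ` X"] by blast
  have "rk M' (f ` insert e X) = rk M' (f ` X)" using y e unfolding mem_cl by simp
  then have "rk M (insert e X) = rk M X" using rk_img[of "insert e X"] rk_img[OF X] X e by simp
  then have "e \<in> cl M X" using e unfolding mem_cl by auto
  then show "y \<in> f ` cl M X" using e by auto
next
  fix y assume "y \<in> f ` cl M X"
  then obtain e where e: "e \<in> cl M X" "y = f e" by blast
  then have e2: "e \<in> gnd M" "rk M (insert e X) = rk M X" unfolding mem_cl by auto
  then have "rk M' (f ` insert e X) = rk M' (f ` X)" using rk_img[of "insert e X"] rk_img[OF X] X by simp
  then show "y \<in> cl M' (f ` X)" using e e2 img unfolding mem_cl by auto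
qed

lemma flat_img: assumes X: "X \<subseteq> gnd M" shows "flat M' (f ` X) \<longleftrightarrow> flat M X"
proof -
  have "f ` X \<subseteq> gnd M'" using X img by auto
  moreover have "cl M X \<subseteq> gnd M" using cl_sub .
  ultimately show ?thesis unfolding flat_def using cl_img[OF X] inj_on_image_eq_iff[OF inj] X by auto
qed

lemma circuit_img: assumes C: "C \<subseteq> gnd M" shows "circuit M' (f ` C) \<longleftrightarrow> circuit M C"
proof
  assume H: "circuit M' (f ` C)"
  have "C \<notin> indep M" using circuitD(2)[OF H] indep_img C by auto
  moreover have "D \<in> indep M" if "D \<subset> C" for D
  proof -
    have sD: "D \<subseteq> gnd M" using that C by auto
    have "f ` D \<subseteq> f ` C" using that by auto
    moreover have "f ` D \<noteq> f ` C" using inj_on_image_eq_iff[OF inj sD C] that by auto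
    ultimately have "f ` D \<subset> f ` C" by auto
    then have "f ` D \<in> indep M'" using circuitD(3)[OF H] by blast
    then show ?thesis using indep_img that C by auto
  qed
  ultimately show "circuit M C" unfolding circuit_def using C by blast
next
  assume H: "circuit M C"
  have "f ` C \<subseteq> gnd M'" using C img by auto
  moreover have "f ` C \<notin> indep M'" using circuitD(2)[OF H] indep_img C by auto
  moreover have "D' \<in> indep M'" if "D' \<subset> f ` C" for D'
  proof -
    let ?D = "{x \<in> C. f x \<in> D'}"
    have eq: "D' = f ` ?D" using that by auto
    have "?D \<subset> C" using that eq by auto
    then have "?D \<in> indep M" using circuitD(3)[OF H] by blast
    then show ?thesis using eq ind by auto
  qed
  ultimately show "circuit M' (f ` C)" unfolding circuit_def by blast
qed

lemma img_Un: "f ` (X \<union> Y) = f ` X \<union> f ` Y" by auto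
lemma img_Int: "X \<subseteq> gnd M \<Longrightarrow> Y \<subseteq> gnd M \<Longrightarrow> f ` (X \<inter> Y) = f ` X \<inter> f ` Y"
  using inj by (simp add: inj_on_image_Int)

lemma modular_img: assumes X: "X \<subseteq> gnd M" shows "modular_flat M' (f ` X) \<longleftrightarrow> modular_flat M X"
proof
  assume H: "modular_flat M' (f ` X)"
  have "flat M X" using H flat_img[OF X] unfolding modular_flat_def by simp
  moreover have "rk M X + rk M Y = rk M (X \<union> Y) + rk M (X \<inter> Y)" if Y: "flat M Y" for Y
  proof -
    have sY: "Y \<subseteq> gnd M" using flat_sub[OF Y] .
    have "flat M' (f ` Y)" using flat_img[OF sY] Y by simp
    then have "rk M' (f ` X) + rk M' (f ` Y) = rk M' (f ` X \<union> f ` Y) + rk M' (f ` X \<inter> f ` Y)"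
      using H unfolding modular_flat_def by blast
    moreover have "rk M' (f ` X) = rk M X" "rk M' (f ` Y) = rk M Y" using rk_img X sY by auto
    moreover have "rk M' (f ` X \<union> f ` Y) = rk M (X \<union> Y)" using rk_img[of "X \<union> Y"] X sY img_Un[of X Y] by simp
    moreover have "rk M' (f ` X \<inter> f ` Y) = rk M (X \<inter> Y)" using rk_img[of "X \<inter> Y"] X img_Int[OF X sY] by (metis inf.coboundedI1)
    ultimately show ?thesis by simp
  qed
  ultimately show "modular_flat M X" unfolding modular_flat_def by blast
next
  assume H: "modular_flat M X"
  have "flat M' (f ` X)" using H flat_img[OF X] unfolding modular_flat_def by simp
  moreover have "rk M' (f ` X) + rk M' Y' = rk M' (f ` X \<union> Y') + rk M' (f ` X \<inter> Y')" if Y': "flat M' Y'" for Y'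
  proof -
    obtain Y where sY: "Y \<subseteq> gnd M" and YY: "Y' = f ` Y" using pre[OF flat_sub[OF Y']] by auto
    have "flat M Y" using flat_img[OF sY] Y' YY by simp
    then have "rk M X + rk M Y = rk M (X \<union> Y) + rk M (X \<inter> Y)" using H unfolding modular_flat_def by blast
    moreover have "rk M' (f ` X) = rk M X" "rk M' (f ` Y) = rk M Y" using rk_img X sY by auto
    moreover have "rk M' (f ` X \<union> f ` Y) = rk M (X \<union> Y)" using rk_img[of "X \<union> Y"] X sY img_Un[of X Y] by simp
    moreover have "rk M' (f ` X \<inter> f ` Y) = rk M (X \<inter> Y)" using rk_img[of "X \<inter> Y"] X img_Int[OF X sY] by (metis inf.coboundedI1)
    ultimately show ?thesis using YY by simp
  qed
  ultimately show "modular_flat M' (f ` X)" unfolding modular_flat_def by blast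
qed

end

lemma iso_isom: "matroid M \<Longrightarrow> iso M M' \<Longrightarrow> \<exists>f. isom M M' f"
  unfolding iso_def isom_def by blast

lemma restr_gnd: "gnd (restr M T) = T" unfolding restr_def gnd_def by simp
lemma restr_indep: "indep (restr M T) = {I \<in> indep M. I \<subseteq> T}" unfolding restr_def indep_def by simp

lemma restr_circuit: "T \<subseteq> gnd M \<Longrightarrow> circuit (restr M T) C \<Longrightarrow> circuit M C"
  unfolding circuit_def restr_gnd restr_indep by auto

section \<open>Binary projective geometries\<close>

definition symd :: "'b set \<Rightarrow> 'b set \<Rightarrow> 'b set" where "symd A B = (A - B) \<union> (B - A)"
definition vsum :: "nat set set \<Rightarrow> nat set" where "vsum G = {i. odd (card {S \<in> G. i \<in> S})}"

lemma symd_mem: "x \<in> symd A B \<longleftrightarrow> (x \<in> A) \<noteq> (x \<in> B)" unfolding symd_def by auto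
lemma symd_empty_iff: "symd A B = {} \<longleftrightarrow> A = B" unfolding symd_def by auto
lemma symd_self: "symd A A = {}" unfolding symd_def by auto
lemma symd_empty2: "symd A {} = A" "symd {} A = A" unfolding symd_def by auto
lemma symd_comm: "symd A B = symd B A" unfolding symd_def by auto
lemma symd_assoc: "symd (symd A B) C = symd A (symd B C)" unfolding symd_def by auto
lemma symd_cancel: "symd A (symd A B) = B" unfolding symd_def by auto
lemma symd_eq_iff: "symd A B = C \<longleftrightarrow> B = symd A C" unfolding symd_def by auto

lemma vsum_empty: "vsum {} = {}" unfolding vsum_def by simp

lemma vsum_single: "vsum {a} = a"
proof -
  have "card {S \<in> {a}. i \<in> S} = (if i \<in> a then 1 else 0)" for i
  proof (cases "i \<in> a")
    case True then have "{S \<in> {a}. i \<in> S} = {a}" by auto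
    then show ?thesis using True by simp
  next
    case False then have "{S \<in> {a}. i \<in> S} = {}" by auto
    then show ?thesis using False by simp
  qed
  then show ?thesis unfolding vsum_def by auto
qed

lemma vsum_union:
  assumes "finite G" "finite H" "G \<inter> H = {}"
  shows "vsum (G \<union> H) = symd (vsum G) (vsum H)"
proof -
  have "card {S \<in> G \<union> H. i \<in> S} = card {S \<in> G. i \<in> S} + card {S \<in> H. i \<in> S}" for i
  proof -
    have "{S \<in> G \<union> H. i \<in> S} = {S \<in> G. i \<in> S} \<union> {S \<in> H. i \<in> S}" by auto
    moreover have "{S \<in> G. i \<in> S} \<inter> {S \<in> H. i \<in> S} = {}" using assms(3) by auto
    ultimately show ?thesis using assms(1,2) by (simp add: card_Un_disjoint)
  qed
  then show ?thesis unfolding vsum_def symd_def by auto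
qed

lemma vsum_insert: "finite G \<Longrightarrow> a \<notin> G \<Longrightarrow> vsum (insert a G) = symd a (vsum G)"
  using vsum_union[of "{a}" G] vsum_single by simp

lemma vsum_symd:
  assumes "finite G" "finite H"
  shows "vsum (symd G H) = symd (vsum G) (vsum H)"
proof -
  have fin: "finite (G - H)" "finite (H - G)" "finite (G \<inter> H)" using assms by auto
  have d1: "(G - H) \<inter> (G \<inter> H) = {}" and d2: "(H - G) \<inter> (G \<inter> H) = {}" and d3: "(G - H) \<inter> (H - G) = {}" by auto
  have eG: "(G - H) \<union> (G \<inter> H) = G" and eH: "(H - G) \<union> (G \<inter> H) = H" and eS: "(G - H) \<union> (H - G) = symd G H"
    unfolding symd_def by auto
  have vG: "vsum G = symd (vsum (G - H)) (vsum (G \<inter> H))"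
    using vsum_union[OF fin(1) fin(3) d1] unfolding eG .
  have vH: "vsum H = symd (vsum (H - G)) (vsum (G \<inter> H))"
    using vsum_union[OF fin(2) fin(3) d2] unfolding eH .
  have "vsum (symd G H) = symd (vsum (G - H)) (vsum (H - G))"
    using vsum_union[OF fin(1) fin(2) d3] unfolding eS .
  then show ?thesis using vG vH unfolding symd_def by auto
qed

lemma vsum_sub: "vsum G \<subseteq> \<Union> G"
proof
  fix i assume "i \<in> vsum G"
  then have "card {S \<in> G. i \<in> S} \<noteq> 0" unfolding vsum_def by (metis even_zero mem_Collect_eq)
  then have "{S \<in> G. i \<in> S} \<noteq> {}" by (metis card.empty)
  then show "i \<in> \<Union> G" by auto
qed

lemma vsum_ne_iff: "vsum G \<noteq> {} \<longleftrightarrow> \<not> (\<forall>i. even (card {S \<in> G. i \<in> S}))"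
  unfolding vsum_def by auto

lemma pg_gnd: "gnd (PG2 r) = pg_ground r" unfolding PG2_def gnd_def by simp
lemma pg_indep_def: "indep (PG2 r) = {F. F \<subseteq> pg_ground r \<and> gf2_lin_indep F}" unfolding PG2_def indep_def by simp

lemma pg_ground_finite: "finite (pg_ground r)"
proof -
  have "pg_ground r \<subseteq> Pow {..<r}" unfolding pg_ground_def by auto
  then show ?thesis by (meson finite_Pow_iff finite_lessThan finite_subset)
qed

lemma pg_indep_iff: "F \<in> indep (PG2 r) \<longleftrightarrow> F \<subseteq> pg_ground r \<and> (\<forall>G. G \<subseteq> F \<and> G \<noteq> {} \<longrightarrow> vsum G \<noteq> {})"
  unfolding pg_indep_def gf2_lin_indep_def vsum_ne_iff by simp

lemma vsum_pg: "G \<subseteq> pg_ground r \<Longrightarrow> vsum G \<noteq> {} \<Longrightarrow> vsum G \<in> pg_ground r"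
proof -
  assume G: "G \<subseteq> pg_ground r" and ne: "vsum G \<noteq> {}"
  have "vsum G \<subseteq> \<Union> G" by (rule vsum_sub)
  also have "\<dots> \<subseteq> {..<r}" using G unfolding pg_ground_def by auto
  finally show ?thesis using ne unfolding pg_ground_def by simp
qed

lemma pg_ne: "x \<in> pg_ground r \<Longrightarrow> x \<noteq> {}" unfolding pg_ground_def by simp

lemma symd_pg: "x \<in> pg_ground r \<Longrightarrow> y \<in> pg_ground r \<Longrightarrow> x \<noteq> y \<Longrightarrow> symd x y \<in> pg_ground r"
  unfolding pg_ground_def symd_def by auto

lemma pg_circuit_iff:
  "circuit (PG2 r) C \<longleftrightarrow> C \<subseteq> pg_ground r \<and> C \<noteq> {} \<and> vsum C = {} \<and> (\<forall>H. H \<subset> C \<and> H \<noteq> {} \<longrightarrow> vsum H \<noteq> {})"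
proof
  assume C: "circuit (PG2 r) C"
  have sub: "C \<subseteq> pg_ground r" using circuitD(1)[OF C] pg_gnd by simp
  obtain G where G: "G \<subseteq> C" "G \<noteq> {}" "vsum G = {}" using circuitD(2)[OF C] sub unfolding pg_indep_iff by blast
  have "G = C"
  proof (rule ccontr)
    assume "G \<noteq> C" then have "G \<subset> C" using G by auto
    then have "G \<in> indep (PG2 r)" using circuitD(3)[OF C] by blast
    then show False using G unfolding pg_indep_iff by blast
  qed
  moreover have "vsum H \<noteq> {}" if "H \<subset> C" "H \<noteq> {}" for H
  proof -
    have "H \<in> indep (PG2 r)" using circuitD(3)[OF C] that by blast
    then show ?thesis using that unfolding pg_indep_iff by blast
  qed
  ultimately show "C \<subseteq> pg_ground r \<and> C \<noteq> {} \<and> vsum C = {} \<and> (\<forall>H. H \<subset> C \<and> H \<noteq> {} \<longrightarrow> vsum H \<noteq> {})"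
    using sub G by auto
next
  assume H: "C \<subseteq> pg_ground r \<and> C \<noteq> {} \<and> vsum C = {} \<and> (\<forall>H. H \<subset> C \<and> H \<noteq> {} \<longrightarrow> vsum H \<noteq> {})"
  have "C \<notin> indep (PG2 r)" using H unfolding pg_indep_iff by blast
  moreover have "D \<in> indep (PG2 r)" if "D \<subset> C" for D
  proof -
    have "D \<subseteq> pg_ground r" using that H by auto
    moreover have "vsum G \<noteq> {}" if "G \<subseteq> D" "G \<noteq> {}" for G
      using H \<open>D \<subset> C\<close> that by (meson subset_psubset_trans)
    ultimately show ?thesis unfolding pg_indep_iff by blast
  qed
  ultimately show "circuit (PG2 r) C" unfolding circuit_def pg_gnd using H by blast
qed

lemma sub_pair: "H \<subseteq> {a, b} \<Longrightarrow> H = {} \<or> H = {a} \<or> H = {b} \<or> H = {a, b}"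
  by (cases "a \<in> H"; cases "b \<in> H") auto

lemma pg_tri:
  assumes x: "x \<in> pg_ground r" and y: "y \<in> pg_ground r" and xy: "x \<noteq> y"
  shows "circuit (PG2 r) {x, y, symd x y}" "symd x y \<noteq> x" "symd x y \<noteq> y" "symd x y \<in> pg_ground r"
proof -
  obtain z where zd: "z = symd x y" by blast
  show z: "symd x y \<in> pg_ground r" using symd_pg[OF x y xy] .
  show zx: "symd x y \<noteq> x" using pg_ne[OF y] unfolding symd_def by auto
  show zy: "symd x y \<noteq> y" using pg_ne[OF x] unfolding symd_def by auto
  have "symd x (symd y z) = {}" unfolding symd_def zd by auto
  then have v: "vsum {x, y, z} = {}"
    using vsum_insert[of "{y, z}" x] vsum_insert[of "{z}" y] vsum_single[of z] zx zy xy zd by simp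
  have zg: "z \<in> pg_ground r" using z zd by simp
  have zx': "z \<noteq> x" and zy': "z \<noteq> y" using zx zy zd by auto
  have vs1: "vsum {a} \<noteq> {}" if "a \<in> pg_ground r" for a
    using that pg_ne vsum_single by metis
  have vs2: "vsum {a, b} \<noteq> {}" if "a \<noteq> b" for a b
    using vsum_insert[of "{b}" a] vsum_single[of b] that by (simp add: symd_empty_iff)
  have "vsum H \<noteq> {}" if H: "H \<subset> {x, y, z}" "H \<noteq> {}" for H
  proof -
    obtain w where w: "w \<in> {x, y, z}" "w \<notin> H" using H by blast
    have Hs: "H \<subseteq> {x, y, z} - {w}" using H w by blast
    have "w = x \<or> w = y \<or> w = z" using w by blast
    then show ?thesis
    proof (elim disjE)
      assume "w = x" then have "H \<subseteq> {y, z}" using Hs by blast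
      then consider "H = {y}" | "H = {z}" | "H = {y, z}" using sub_pair[of H y z] H(2) by blast
      then show ?thesis using vs1[OF y] vs1[OF zg] vs2[OF zy'[symmetric]] by cases simp_all
    next
      assume "w = y" then have "H \<subseteq> {x, z}" using Hs by blast
      then consider "H = {x}" | "H = {z}" | "H = {x, z}" using sub_pair[of H x z] H(2) by blast
      then show ?thesis using vs1[OF x] vs1[OF zg] vs2[OF zx'[symmetric]] by cases simp_all
    next
      assume "w = z" then have "H \<subseteq> {x, y}" using Hs by blast
      then consider "H = {x}" | "H = {y}" | "H = {x, y}" using sub_pair[of H x y] H(2) by blast
      then show ?thesis using vs1[OF x] vs1[OF y] vs2[OF xy] by cases simp_all
    qed
  qed
  then have "circuit (PG2 r) {x, y, z}" unfolding pg_circuit_iff using x y zg v by auto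
  then show "circuit (PG2 r) {x, y, symd x y}" using zd by simp
qed

lemma pg_tri_eq:
  assumes C: "circuit (PG2 r) {x, y, z}" and d: "x \<noteq> y" "x \<noteq> z" "y \<noteq> z"
  shows "z = symd x y"
proof -
  have "vsum {x, y, z} = {}" using C unfolding pg_circuit_iff by blast
  then have "symd x (symd y z) = {}" using vsum_insert[of "{y, z}" x] vsum_insert[of "{z}" y] vsum_single[of z] d by simp
  then show ?thesis unfolding symd_def by blast
qed

context
  fixes r :: nat
  assumes mP: "matroid (PG2 r)"
begin

lemma pg_span_basis:
  assumes B: "B \<in> indep (PG2 r)" and e: "e \<in> pg_ground r" "e \<notin> B" and dep: "insert e B \<notin> indep (PG2 r)"
  shows "\<exists>K \<subseteq> B. vsum K = e"
proof -
  have sB: "B \<subseteq> pg_ground r" using B unfolding pg_indep_iff by blast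
  obtain G where G: "G \<subseteq> insert e B" "G \<noteq> {}" "vsum G = {}" using dep sB e unfolding pg_indep_iff by blast
  have eG: "e \<in> G"
  proof (rule ccontr)
    assume "e \<notin> G" then have "G \<subseteq> B" using G by auto
    then show False using B G unfolding pg_indep_iff by blast
  qed
  let ?K = "G - {e}"
  have "?K \<subseteq> pg_ground r" using G sB by auto
  then have fK: "finite ?K" using finite_subset[OF _ pg_ground_finite] by blast
  have "G = insert e ?K" using eG by auto
  then have "vsum G = symd e (vsum ?K)" using vsum_insert[OF fK] by (metis Diff_iff insertI1)
  then have "vsum ?K = e" using G(3) unfolding symd_def by blast
  moreover have "?K \<subseteq> B" using G by auto
  ultimately show ?thesis by blast
qed

lemma pg_cl_span:
  assumes X: "X \<subseteq> pg_ground r" and e: "e \<in> cl (PG2 r) X"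
  shows "\<exists>H \<subseteq> X. vsum H = e"
proof -
  have eg: "e \<in> pg_ground r" and rk: "rk (PG2 r) (insert e X) = rk (PG2 r) X" using e unfolding mem_cl pg_gnd by auto
  obtain B where B: "B \<subseteq> X" "B \<in> indep (PG2 r)" "card B = rk (PG2 r) X" using rk_basis[OF mP] by blast
  show ?thesis
  proof (cases "e \<in> B")
    case True then show ?thesis using B vsum_single[of e] by (intro exI[of _ "{e}"]) auto
  next
    case False
    have "insert e B \<notin> indep (PG2 r)"
    proof
      assume "insert e B \<in> indep (PG2 r)"
      then have "card (insert e B) \<le> rk (PG2 r) (insert e X)" using rk_ge[OF mP] B by blast
      then show False using False B rk indep_finite[OF mP B(2)] by simp
    qed
    then obtain K where "K \<subseteq> B" "vsum K = e" using pg_span_basis[OF B(2) eg False] by blast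
    then show ?thesis using B by auto
  qed
qed

lemma pg_span_sub_basis:
  assumes X: "X \<subseteq> pg_ground r" and B: "B \<subseteq> X" "B \<in> indep (PG2 r)" "card B = rk (PG2 r) X"
    and H: "H \<subseteq> X"
  shows "\<exists>K \<subseteq> B. vsum K = vsum H"
proof -
  have fB: "finite B" using indep_finite[OF mP B(2)] .
  have each: "\<exists>K \<subseteq> B. vsum K = x" if x: "x \<in> X" for x
  proof (cases "x \<in> B")
    case True then show ?thesis using vsum_single[of x] by (intro exI[of _ "{x}"]) auto
  next
    case False
    have "insert x B \<notin> indep (PG2 r)"
    proof
      assume "insert x B \<in> indep (PG2 r)"
      then have "card (insert x B) \<le> rk (PG2 r) X" using rk_ge[OF mP] B x by blast
      then show False using False B fB by simp
    qed
    then show ?thesis using pg_span_basis[OF B(2) _ False] x X by blast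
  qed
  have fH: "finite H" using finite_subset[OF order_trans[OF H X] pg_ground_finite] .
  show ?thesis using fH H
  proof (induction H rule: finite_induct)
    case empty then show ?case using vsum_empty by (intro exI[of _ "{}"]) auto
  next
    case (insert h H)
    obtain K1 where K1: "K1 \<subseteq> B" "vsum K1 = h" using each insert by auto
    obtain K2 where K2: "K2 \<subseteq> B" "vsum K2 = vsum H" using insert by auto
    have fK: "finite K1" "finite K2" using K1 K2 fB finite_subset by auto
    have "vsum (symd K1 K2) = vsum (insert h H)"
      using vsum_symd[OF fK] vsum_insert[OF insert(1,2)] K1 K2 by simp
    moreover have "symd K1 K2 \<subseteq> B" using K1 K2 unfolding symd_def by auto
    ultimately show ?case by blast
  qed
qed

lemma pg_vsum_in_cl:
  assumes X: "X \<subseteq> pg_ground r" and H: "H \<subseteq> X" and ne: "vsum H \<noteq> {}"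
  shows "vsum H \<in> cl (PG2 r) X"
proof -
  obtain B where B: "B \<subseteq> X" "B \<in> indep (PG2 r)" "card B = rk (PG2 r) X" using rk_basis[OF mP] by blast
  obtain K where K: "K \<subseteq> B" "vsum K = vsum H" using pg_span_sub_basis[OF X B H] by blast
  let ?v = "vsum H"
  have fB: "finite B" using indep_finite[OF mP B(2)] .
  have vg: "?v \<in> pg_ground r" using vsum_pg[of H r] H X ne by auto
  have sB: "B \<subseteq> gnd (PG2 r)" using B X pg_gnd by auto
  have "?v \<in> cl (PG2 r) B"
  proof (cases "?v \<in> B")
    case True then show ?thesis using cl_ext[OF sB] by auto
  next
    case False
    have fK: "finite K" using K fB finite_subset by auto
    have vK: "?v \<notin> K" using False K by auto
    have "vsum (insert ?v K) = {}" using vsum_insert[OF fK vK] K symd_self by simp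
    moreover have "insert ?v K \<subseteq> insert ?v B" using K by auto
    ultimately have "insert ?v B \<notin> indep (PG2 r)" unfolding pg_indep_iff by blast
    then show ?thesis using indep_insert_iff[OF mP B(2), of ?v] vg False pg_gnd by auto
  qed
  moreover have "cl (PG2 r) B \<subseteq> cl (PG2 r) X" using cl_mono[OF mP B(1)] .
  ultimately show ?thesis by blast
qed

lemma pg_closed_flat:
  assumes U: "U \<subseteq> pg_ground r" and cl: "\<forall>x\<in>U. \<forall>y\<in>U. x \<noteq> y \<longrightarrow> symd x y \<in> U"
  shows "flat (PG2 r) U"
proof -
  have ins: "vsum H \<in> insert {} U" if "finite H" "H \<subseteq> U" for H
    using that
  proof (induction H rule: finite_induct)
    case empty then show ?case using vsum_empty by simp
  next
    case (insert h H)
    have hU: "h \<in> U" using insert by auto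
    have v: "vsum (insert h H) = symd h (vsum H)" using vsum_insert[OF insert(1,2)] .
    have "vsum H \<in> insert {} U" using insert by auto
    then consider "vsum H = {}" | "vsum H = h" | "vsum H \<in> U" "vsum H \<noteq> h" by auto
    then show ?case
    proof cases
      case 1 then show ?thesis using v hU by (simp add: symd_empty2)
    next
      case 2 then show ?thesis using v by (simp add: symd_self)
    next
      case 3 then show ?thesis using v hU cl by auto
    qed
  qed
  have "cl (PG2 r) U \<subseteq> U"
  proof
    fix e assume e: "e \<in> cl (PG2 r) U"
    then obtain H where H: "H \<subseteq> U" "vsum H = e" using pg_cl_span[OF U] by blast
    have "finite H" using finite_subset[OF order_trans[OF H(1) U] pg_ground_finite] .
    then have "e \<in> insert {} U" using ins H by blast
    moreover have "e \<noteq> {}" using e cl_sub[of "PG2 r" U] pg_gnd pg_ne by blast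
    ultimately show "e \<in> U" by blast
  qed
  moreover have "U \<subseteq> cl (PG2 r) U" using cl_ext[of U "PG2 r"] U pg_gnd by simp
  ultimately show ?thesis unfolding flat_def using U pg_gnd by auto
qed

end

context
  fixes r :: nat
  assumes mP: "matroid (PG2 r)"
begin

lemma pg_modular:
  assumes F: "flat (PG2 r) F"
  shows "modular_flat (PG2 r) F"
proof -
  let ?P = "PG2 r"
  have sF: "F \<subseteq> pg_ground r" using flat_sub[OF F] pg_gnd by simp
  have "rk ?P F + rk ?P Y = rk ?P (F \<union> Y) + rk ?P (F \<inter> Y)" if Y: "flat ?P Y" for Y
  proof -
    have sY: "Y \<subseteq> pg_ground r" using flat_sub[OF Y] pg_gnd by simp
    obtain BI where BI: "BI \<subseteq> F \<inter> Y" "BI \<in> indep ?P" "card BI = rk ?P (F \<inter> Y)" using rk_basis[OF mP] by blast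
    obtain BF where BF: "BI \<subseteq> BF" "BF \<subseteq> F" "BF \<in> indep ?P" "card BF = rk ?P F"
      using rk_extend[OF mP BI(2), of F] BI by blast
    obtain BY where BY: "BI \<subseteq> BY" "BY \<subseteq> Y" "BY \<in> indep ?P" "card BY = rk ?P Y"
      using rk_extend[OF mP BI(2), of Y] BI by blast
    have fin: "finite BF" "finite BY" "finite BI" using indep_finite[OF mP] BF BY BI by auto
    have "BF \<inter> BY \<in> indep ?P" using matroidD(4)[OF mP BF(3), of "BF \<inter> BY"] by blast
    then have "card (BF \<inter> BY) \<le> card BI" using rk_ge[OF mP, of "BF \<inter> BY" "F \<inter> Y"] BF BY BI by auto
    moreover have "BI \<subseteq> BF \<inter> BY" using BF BY by auto
    ultimately have int: "BF \<inter> BY = BI" using fin card_seteq[of "BF \<inter> BY" BI] by auto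
    have ind: "BF \<union> BY \<in> indep ?P"
      unfolding pg_indep_iff
    proof (intro conjI allI impI)
      show "BF \<union> BY \<subseteq> pg_ground r" using BF BY sF sY by auto
      fix G assume G: "G \<subseteq> BF \<union> BY \<and> G \<noteq> {}"
      show "vsum G \<noteq> {}"
      proof
        assume vG: "vsum G = {}"
        let ?G1 = "G \<inter> BF" and ?G2 = "G - BF"
        have fG: "finite ?G1" "finite ?G2" using G fin by (auto intro: finite_subset)
        have "?G1 \<union> ?G2 = G" by auto
        then have "symd (vsum ?G1) (vsum ?G2) = {}" using vsum_union[OF fG] vG by auto
        then have eqv: "vsum ?G1 = vsum ?G2" by (simp add: symd_empty_iff)
        have G2B: "?G2 \<subseteq> BY" using G by auto
        have "?G2 \<noteq> {}"
        proof
          assume "?G2 = {}"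
          then have "G \<subseteq> BF" by auto
          then show False using BF(3) G vG unfolding pg_indep_iff by blast
        qed
        then have vne: "vsum ?G2 \<noteq> {}" using BY(3) G2B unfolding pg_indep_iff by blast
        have "vsum ?G2 \<in> cl ?P Y" using pg_vsum_in_cl[OF mP sY, of ?G2] G2B BY vne by auto
        then have vY: "vsum ?G2 \<in> Y" using flat_cl_eq[OF Y] by simp
        have "vsum ?G1 \<in> cl ?P F" using pg_vsum_in_cl[OF mP sF, of ?G1] BF eqv vne by auto
        then have vF: "vsum ?G2 \<in> F" using flat_cl_eq[OF F] eqv by simp
        have "F \<inter> Y \<subseteq> cl ?P BI" using basis_cl[OF mP, of BI "F \<inter> Y"] BI sF pg_gnd by auto
        then have inBI: "vsum ?G2 \<in> cl ?P BI" using vF vY by auto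
        have sBI: "BI \<subseteq> pg_ground r" using BI sF by auto
        obtain H where H: "H \<subseteq> BI" "vsum H = vsum ?G2" using pg_cl_span[OF mP sBI inBI] by (elim exE conjE)
        have fH: "finite H" using H fin finite_subset by auto
        have dj: "?G2 \<inter> H = {}" using H BF by auto
        have "vsum (?G2 \<union> H) = {}" using vsum_union[OF fG(2) fH dj] H symd_self by simp
        moreover have "?G2 \<union> H \<subseteq> BY" using G2B H BY by auto
        moreover have "?G2 \<union> H \<noteq> {}" using \<open>?G2 \<noteq> {}\<close> by auto
        ultimately show False using BY(3) unfolding pg_indep_iff by blast
      qed
    qed
    have "BF \<union> BY \<subseteq> F \<union> Y" using BF BY by auto
    then have "card (BF \<union> BY) \<le> rk ?P (F \<union> Y)" using rk_ge[OF mP ind] by blast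
    moreover have "card (BF \<union> BY) + card (BF \<inter> BY) = card BF + card BY" using card_Un_Int[OF fin(1,2)] by simp
    moreover have "rk ?P (F \<union> Y) + rk ?P (F \<inter> Y) \<le> rk ?P F + rk ?P Y" using rk_submod[OF mP] .
    moreover have "card (BF \<inter> BY) = card BI" using int by simp
    ultimately show ?thesis using BF(4) BY(4) BI(3) by linarith
  qed
  then show ?thesis unfolding modular_flat_def using F by blast
qed

end

lemma pg_chordal: "chordal (PG2 r)"
  unfolding chordal_def
proof (intro allI impI)
  fix C assume H: "circuit (PG2 r) C \<and> 4 \<le> card C"
  then have C: "circuit (PG2 r) C" and c4: "4 \<le> card C" by auto
  have Cc: "C \<subseteq> pg_ground r" "C \<noteq> {}" "vsum C = {}" "\<And>H. H \<subset> C \<Longrightarrow> H \<noteq> {} \<Longrightarrow> vsum H \<noteq> {}"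
    using C unfolding pg_circuit_iff by auto
  have fC: "finite C" using finite_subset[OF Cc(1) pg_ground_finite] .
  obtain c1 where c1: "c1 \<in> C" using Cc(2) by blast
  have "card (C - {c1}) \<ge> 3" using c4 c1 fC by (simp add: card_Diff_singleton)
  then have "C - {c1} \<noteq> {}" by (intro notI) simp
  then obtain c2 where c2: "c2 \<in> C" "c2 \<noteq> c1" by blast
  obtain e where ed: "e = symd c1 c2" by blast
  have g1: "c1 \<in> pg_ground r" and g2: "c2 \<in> pg_ground r" using c1 c2 Cc by auto
  have tri: "circuit (PG2 r) {c1, c2, e}" "e \<noteq> c1" "e \<noteq> c2" "e \<in> pg_ground r"
    using pg_tri[OF g1 g2 c2(2)[symmetric]] ed by auto
  have vtri: "vsum {c1, c2, e} = {}" using tri(1) unfolding pg_circuit_iff by blast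
  have eC: "e \<notin> C"
  proof
    assume "e \<in> C"
    then have sub: "{c1, c2, e} \<subseteq> C" using c1 c2 by auto
    have "card {c1, c2, e} \<le> 3" by (simp add: card_insert_le_m1)
    then have "{c1, c2, e} \<noteq> C" using c4 by auto
    then have "{c1, c2, e} \<subset> C" using sub by auto
    then show False using Cc(4) vtri by blast
  qed
  let ?R = "C - {c1, c2}"
  have fR: "finite ?R" using fC by auto
  have Ceq: "C = insert c1 (insert c2 ?R)" using c1 c2 by auto
  have "vsum C = symd c1 (symd c2 (vsum ?R))"
  proof -
    have "vsum (insert c1 (insert c2 ?R)) = symd c1 (vsum (insert c2 ?R))"
      using vsum_insert[of "insert c2 ?R" c1] fR c2 by auto
    also have "vsum (insert c2 ?R) = symd c2 (vsum ?R)" using vsum_insert[OF fR] by auto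
    finally show ?thesis using Ceq by simp
  qed
  then have vR: "vsum ?R = e" using Cc(3) ed unfolding symd_def by blast
  let ?C2 = "insert e ?R"
  have eR: "e \<notin> ?R" using eC by auto
  have vC2: "vsum ?C2 = {}" using vsum_insert[OF fR eR] vR symd_self by simp
  have C2circ: "circuit (PG2 r) ?C2"
    unfolding pg_circuit_iff
  proof (intro conjI allI impI)
    show "?C2 \<subseteq> pg_ground r" using tri Cc by auto
    show "?C2 \<noteq> {}" by simp
    show "vsum ?C2 = {}" using vC2 .
    fix H assume HH: "H \<subset> ?C2 \<and> H \<noteq> {}"
    show "vsum H \<noteq> {}"
    proof (cases "e \<in> H")
      case False
      then have "H \<subseteq> ?R" using HH by auto
      then have "H \<subset> C" using c1 by auto
      then show ?thesis using Cc(4) HH by blast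
    next
      case True
      show ?thesis
      proof
        assume vH: "vsum H = {}"
        let ?H0 = "H - {e}"
        have fH0: "finite ?H0" using HH fR by (meson finite_Diff finite_insert finite_subset psubset_imp_subset)
        have "H = insert e ?H0" using True by auto
        then have "vsum H = symd e (vsum ?H0)" using vsum_insert[OF fH0] by (metis Diff_iff insertI1)
        then have vH0: "vsum ?H0 = e" using vH unfolding symd_def by blast
        have H0R: "?H0 \<subseteq> ?R" using HH by auto
        let ?H' = "insert c1 (insert c2 ?H0)"
        have "vsum ?H' = symd c1 (symd c2 e)"
        proof -
          have "vsum ?H' = symd c1 (vsum (insert c2 ?H0))"
            using vsum_insert[of "insert c2 ?H0" c1] fH0 c2 H0R by auto
          also have "vsum (insert c2 ?H0) = symd c2 (vsum ?H0)"
          proof -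
            have "c2 \<notin> ?H0" using H0R by blast
            then show ?thesis using vsum_insert[OF fH0] by simp
          qed
          finally show ?thesis using vH0 by simp
        qed
        then have vH': "vsum ?H' = {}" using ed unfolding symd_def by auto
        obtain w where w: "w \<in> ?C2" "w \<notin> H" using HH by blast
        have "w \<in> ?R" using w True by auto
        then have "w \<in> C" "w \<notin> ?H'" using w by auto
        then have "?H' \<subset> C" using H0R c1 c2 by auto
        then show False using Cc(4) vH' by blast
      qed
    qed
  qed
  have int: "{c1, c2, e} \<inter> ?C2 = {e}" by auto
  have un: "C = ({c1, c2, e} \<union> ?C2) - {e}" using c1 c2 eC tri by auto
  show "\<exists>C1 C2 e. circuit (PG2 r) C1 \<and> circuit (PG2 r) C2 \<and> C1 \<inter> C2 = {e} \<and> C = C1 \<union> C2 - {e}"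
    using tri(1) C2circ int un by blast
qed

context isom begin

lemma img_eq: "A \<subseteq> gnd M \<Longrightarrow> B \<subseteq> gnd M \<Longrightarrow> f ` A = f ` B \<longleftrightarrow> A = B"
  using inj_on_image_eq_iff[OF inj] by blast

lemma img_diff: "A \<subseteq> gnd M \<Longrightarrow> B \<subseteq> gnd M \<Longrightarrow> f ` (A - B) = f ` A - f ` B"
  by (rule inj_on_image_set_diff[OF inj]) auto

lemma pre_elem: assumes "y \<in> gnd M'" shows "\<exists>x. x \<in> gnd M \<and> f x = y"
proof -
  have "y \<in> f ` gnd M" using img assms by simp
  then show ?thesis by (elim imageE) auto
qed

lemma img_in: "x \<in> gnd M \<Longrightarrow> f x \<in> gnd M'"
  using img by (auto intro: imageI)

lemma inj_eq: "x \<in> gnd M \<Longrightarrow> y \<in> gnd M \<Longrightarrow> f x = f y \<longleftrightarrow> x = y"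
  using inj_onD[OF inj] by auto

end

lemma bpg_isom: "binary_pg M \<Longrightarrow> \<exists>r f. isom M (PG2 r) f"
  unfolding binary_pg_def using iso_isom by blast

lemma bpg_matroid: "binary_pg M \<Longrightarrow> matroid M"
  unfolding binary_pg_def by blast

lemma bpg_chordal:
  assumes B: "binary_pg M" shows "chordal M"
proof -
  obtain r f where I: "isom M (PG2 r) f" using bpg_isom[OF B] by blast
  interpret isom M "PG2 r" f by (rule I)
  show ?thesis unfolding chordal_def
  proof (intro allI impI)
    fix C assume H: "circuit M C \<and> 4 \<le> card C"
    have sC: "C \<subseteq> gnd M" using circuitD(1) H by blast
    have "circuit (PG2 r) (f ` C)" using circuit_img[OF sC] H by blast
    moreover have "card (f ` C) \<ge> 4" using card_img[OF sC] H by simp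
    ultimately have "\<exists>C1 C2 e. circuit (PG2 r) C1 \<and> circuit (PG2 r) C2 \<and> C1 \<inter> C2 = {e} \<and> f ` C = C1 \<union> C2 - {e}"
      using pg_chordal[of r] unfolding chordal_def by (elim allE impE) (rule conjI)
    then obtain C1' C2' e' where P: "circuit (PG2 r) C1'" "circuit (PG2 r) C2'" "C1' \<inter> C2' = {e'}"
        "f ` C = C1' \<union> C2' - {e'}"
      by (elim exE conjE)
    obtain C1 where C1: "C1 \<subseteq> gnd M" "C1' = f ` C1" using pre[OF circuitD(1)[OF P(1)]] by auto
    obtain C2 where C2: "C2 \<subseteq> gnd M" "C2' = f ` C2" using pre[OF circuitD(1)[OF P(2)]] by auto
    have e'g: "e' \<in> gnd (PG2 r)" using P(3) circuitD(1)[OF P(1)] by blast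
    obtain e where e: "e \<in> gnd M" "f e = e'" using pre_elem[OF e'g] by blast
    have c1: "circuit M C1" using circuit_img[OF C1(1)] P(1) C1(2) by simp
    have c2: "circuit M C2" using circuit_img[OF C2(1)] P(2) C2(2) by simp
    have se: "{e} \<subseteq> gnd M" using e by simp
    have "f ` (C1 \<inter> C2) = f ` {e}" using img_Int[OF C1(1) C2(1)] P(3) C1 C2 e by simp
    then have i: "C1 \<inter> C2 = {e}" using img_eq[of "C1 \<inter> C2" "{e}"] C1 se by blast
    have sU: "C1 \<union> C2 \<subseteq> gnd M" using C1 C2 by auto
    have "f ` (C1 \<union> C2 - {e}) = f ` (C1 \<union> C2) - f ` {e}" using img_diff[OF sU se] .
    also have "\<dots> = C1' \<union> C2' - {e'}" unfolding C1(2) C2(2) using e(2) by (simp add: image_Un)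
    finally have "f ` C = f ` (C1 \<union> C2 - {e})" using P(4) by simp
    moreover have sD: "C1 \<union> C2 - {e} \<subseteq> gnd M" using sU by auto
    ultimately have u: "C = C1 \<union> C2 - {e}" using img_eq[OF sC sD] by simp
    show "\<exists>C1 C2 e. circuit M C1 \<and> circuit M C2 \<and> C1 \<inter> C2 = {e} \<and> C = C1 \<union> C2 - {e}"
      using c1 c2 i u by blast
  qed
qed

lemma bpg_modular:
  assumes B: "binary_pg M" and F: "flat M F" shows "modular_flat M F"
proof -
  obtain r f where I: "isom M (PG2 r) f" using bpg_isom[OF B] by blast
  interpret isom M "PG2 r" f by (rule I)
  have sF: "F \<subseteq> gnd M" using flat_sub[OF F] .
  have "flat (PG2 r) (f ` F)" using flat_img[OF sF] F by simp
  then have "modular_flat (PG2 r) (f ` F)" using pg_modular[OF matroid'] by blast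
  then show ?thesis using modular_img[OF sF] by simp
qed

lemma bpg_tri:
  assumes B: "binary_pg M" and x: "x \<in> gnd M" and y: "y \<in> gnd M" and xy: "x \<noteq> y"
  shows "\<exists>z. z \<in> gnd M \<and> z \<noteq> x \<and> z \<noteq> y \<and> circuit M {x, y, z}"
proof -
  obtain r f where I: "isom M (PG2 r) f" using bpg_isom[OF B] by blast
  interpret isom M "PG2 r" f by (rule I)
  have fx: "f x \<in> pg_ground r" and fy: "f y \<in> pg_ground r" using img_in x y pg_gnd by auto
  have fxy: "f x \<noteq> f y" using inj_eq[OF x y] xy by simp
  note T = pg_tri[OF fx fy fxy]
  obtain z where z: "z \<in> gnd M" "f z = symd (f x) (f y)" using pre_elem[of "symd (f x) (f y)"] T(4) pg_gnd by auto
  have sub: "{x, y, z} \<subseteq> gnd M" using x y z by auto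
  have "f ` {x, y, z} = {f x, f y, symd (f x) (f y)}" using z by simp
  then have "circuit M {x, y, z}" using circuit_img[OF sub] T(1) by simp
  moreover have "z \<noteq> x" "z \<noteq> y" using T(2,3) z by auto
  ultimately show ?thesis using z by blast
qed

lemma bpg_Q:
  assumes B: "binary_pg M" and T: "T \<subseteq> gnd M" and BT: "binary_pg (restr M T)"
  shows "modular_flat M T"
proof -
  obtain r f where I: "isom M (PG2 r) f" using bpg_isom[OF B] by blast
  interpret isom M "PG2 r" f by (rule I)
  have sT: "f ` T \<subseteq> pg_ground r" using T img pg_gnd by auto
  have "\<forall>x'\<in>f ` T. \<forall>y'\<in>f ` T. x' \<noteq> y' \<longrightarrow> symd x' y' \<in> f ` T"
  proof (intro ballI impI)
    fix x' y' assume x': "x' \<in> f ` T" and y': "y' \<in> f ` T" and ne: "x' \<noteq> y'"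
    obtain x where x: "x \<in> T" "x' = f x" using x' by blast
    obtain y where y: "y \<in> T" "y' = f y" using y' by blast
    have xy: "x \<noteq> y" using ne x y by auto
    obtain z where z: "z \<in> T" "z \<noteq> x" "z \<noteq> y" "circuit (restr M T) {x, y, z}"
      using bpg_tri[OF BT, of x y] x(1) y(1) xy unfolding restr_gnd by blast
    have cM: "circuit M {x, y, z}" using restr_circuit[OF T z(4)] .
    have sub: "{x, y, z} \<subseteq> gnd M" using x y z T by auto
    have "circuit (PG2 r) {f x, f y, f z}" using circuit_img[OF sub] cM by simp
    moreover have "f x \<noteq> f y" "f x \<noteq> f z" "f y \<noteq> f z" using inj_eq xy z x y T by auto
    ultimately have "f z = symd (f x) (f y)" using pg_tri_eq by blast
    then show "symd x' y' \<in> f ` T" using x y z by auto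
  qed
  then have "flat (PG2 r) (f ` T)" using pg_closed_flat[OF matroid' sT] by blast
  then have "flat M T" using flat_img[OF T] by simp
  then show ?thesis using bpg_modular[OF B] by blast
qed

section \<open>Modular flats and restrictions\<close>

lemma rk_subadd: "matroid M \<Longrightarrow> rk M (X \<union> Y) \<le> rk M X + rk M Y"
  using rk_submod[of M X Y] by linarith

lemma modD: "modular_flat M T \<Longrightarrow> flat M Y \<Longrightarrow> rk M T + rk M Y = rk M (T \<union> Y) + rk M (T \<inter> Y)"
  unfolding modular_flat_def by blast

lemma modD_flat: "modular_flat M T \<Longrightarrow> flat M T"
  unfolding modular_flat_def by blast

lemma cl_flat_sub: "matroid M \<Longrightarrow> flat M F \<Longrightarrow> X \<subseteq> F \<Longrightarrow> cl M X \<subseteq> F"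
  by (rule cl_least)

lemma mod_cl:
  assumes m: "matroid M" and T: "modular_flat M T" and A: "flat M A" and S: "flat M S"
    and AS: "A \<inter> T \<subseteq> S" and ST: "S \<subseteq> T"
  shows "cl M (A \<union> S) \<inter> T = S"
proof -
  let ?F = "cl M (A \<union> S)"
  have Ff: "flat M ?F" using flat_cl[OF m] .
  have sA: "A \<subseteq> gnd M" and sS: "S \<subseteq> gnd M" using flat_sub[OF A] flat_sub[OF S] by auto
  have SF: "S \<subseteq> ?F \<inter> T" using cl_ext[of "A \<union> S" M] sA sS ST by auto
  have m1: "rk M T + rk M ?F = rk M (T \<union> ?F) + rk M (T \<inter> ?F)" using modD[OF T Ff] .
  have m2: "rk M T + rk M A = rk M (T \<union> A) + rk M (T \<inter> A)" using modD[OF T A] .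
  have r1: "rk M ?F = rk M (A \<union> S)" using rk_cl[OF m] .
  have sm: "rk M (A \<union> S) + rk M (A \<inter> S) \<le> rk M A + rk M S" using rk_submod[OF m] .
  have AiS: "A \<inter> S = T \<inter> A" using AS ST by auto
  have "rk M (T \<union> ?F) = rk M (cl M (A \<union> S) \<union> T)" by (simp add: Un_commute)
  also have "\<dots> = rk M ((A \<union> S) \<union> T)" using rk_union_cl[OF m] .
  also have "(A \<union> S) \<union> T = T \<union> A" using ST by auto
  finally have r2: "rk M (T \<union> ?F) = rk M (T \<union> A)" .
  have "rk M (T \<inter> ?F) \<le> rk M S" using m1 m2 r1 sm AiS r2 by (simp add: Int_commute; linarith)
  then have "?F \<inter> T \<subseteq> cl M S" using rk_eq_sub_cl[OF m, of S "?F \<inter> T"] SF cl_sub[of M "A \<union> S"]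
    by (auto simp: Int_commute)
  then have "?F \<inter> T \<subseteq> S" using flat_cl_eq[OF S] by simp
  then show ?thesis using SF by auto
qed

lemma mod_incr:
  assumes m: "matroid M" and T: "modular_flat M T" and F: "flat M F" and Y: "Y \<subseteq> T"
  shows "rk M (F \<union> Y) + rk M (F \<inter> T) = rk M F + rk M ((F \<inter> T) \<union> Y)"
proof -
  have Tf: "flat M T" using modD_flat[OF T] .
  have sT: "T \<subseteq> gnd M" using flat_sub[OF Tf] .
  let ?S = "cl M ((F \<inter> T) \<union> Y)"
  have ST: "?S \<subseteq> T" using cl_least[OF m Tf, of "(F \<inter> T) \<union> Y"] Y by auto
  have Sf: "flat M ?S" using flat_cl[OF m] .
  have FTS: "F \<inter> T \<subseteq> ?S" using cl_ext[of "(F \<inter> T) \<union> Y" M] Y sT by auto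
  have e1: "cl M (F \<union> ?S) \<inter> T = ?S" using mod_cl[OF m T F Sf _ ST] FTS by (simp add: Int_commute)
  have "cl M (F \<union> ?S) = cl M (?S \<union> F)" by (simp add: Un_commute)
  also have "\<dots> = cl M (((F \<inter> T) \<union> Y) \<union> F)" using cl_union_cl[OF m] .
  also have "((F \<inter> T) \<union> Y) \<union> F = F \<union> Y" by auto
  finally have G: "cl M (F \<union> ?S) = cl M (F \<union> Y)" .
  let ?G = "cl M (F \<union> Y)"
  have GT: "?G \<inter> T = ?S" using e1 G by simp
  have Gf: "flat M ?G" using flat_cl[OF m] .
  have m1: "rk M T + rk M ?G = rk M (T \<union> ?G) + rk M (T \<inter> ?G)" using modD[OF T Gf] .
  have m2: "rk M T + rk M F = rk M (T \<union> F) + rk M (T \<inter> F)" using modD[OF T F] .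
  have "rk M (T \<union> ?G) = rk M (cl M (F \<union> Y) \<union> T)" by (simp add: Un_commute)
  also have "\<dots> = rk M ((F \<union> Y) \<union> T)" using rk_union_cl[OF m] .
  also have "(F \<union> Y) \<union> T = T \<union> F" using Y by auto
  finally have r2: "rk M (T \<union> ?G) = rk M (T \<union> F)" .
  have r3: "rk M (T \<inter> ?G) = rk M ((F \<inter> T) \<union> Y)" using GT rk_cl[OF m] by (simp add: Int_commute)
  have r4: "rk M ?G = rk M (F \<union> Y)" using rk_cl[OF m] .
  show ?thesis using m1 m2 r2 r3 r4 by (simp add: Int_commute; linarith)
qed

lemma drop_lemma:
  assumes m: "matroid M" and T: "modular_flat M T" and B1: "B1 \<in> indep M"
    and BT: "BT \<subseteq> B1" "BT \<subseteq> T" "card BT = rk M (cl M B1 \<inter> T)" and b: "b \<in> BT"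
  shows "cl M (B1 - {b}) \<inter> T \<subseteq> cl M (BT - {b})"
proof -
  have Tf: "flat M T" using modD_flat[OF T] .
  have sB: "B1 \<subseteq> gnd M" using matroidD(2)[OF m B1] .
  have fB: "finite B1" using indep_finite[OF m B1] .
  let ?A = "cl M (B1 - {b})" and ?Z = "cl M B1"
  have Af: "flat M ?A" and Zf: "flat M ?Z" using flat_cl[OF m] by auto
  have mA: "rk M T + rk M ?A = rk M (T \<union> ?A) + rk M (T \<inter> ?A)" using modD[OF T Af] .
  have mZ: "rk M T + rk M ?Z = rk M (T \<union> ?Z) + rk M (T \<inter> ?Z)" using modD[OF T Zf] .
  have iB: "B1 - {b} \<in> indep M" using matroidD(4)[OF m B1] by blast
  have rA: "rk M ?A + 1 = card B1"
    using rk_cl[OF m, of "B1 - {b}"] rk_indep[OF m iB] fB b BT card_Diff_singleton[of b B1] card_gt_0_iff[of B1]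
    by auto
  have rZ: "rk M ?Z = card B1" using rk_cl[OF m, of B1] rk_indep[OF m B1] by simp
  have "rk M (T \<union> ?A) = rk M (cl M (B1 - {b}) \<union> T)" by (simp add: Un_commute)
  also have "\<dots> = rk M ((B1 - {b}) \<union> T)" using rk_union_cl[OF m] .
  also have "(B1 - {b}) \<union> T = B1 \<union> T" using b BT by auto
  also have "rk M (B1 \<union> T) = rk M (cl M B1 \<union> T)" using rk_union_cl[OF m] by simp
  finally have rU: "rk M (T \<union> ?A) = rk M (T \<union> ?Z)" by (simp add: Un_commute)
  have rT: "rk M (T \<inter> ?Z) = card BT" using BT by (simp add: Int_commute)
  have "rk M (T \<inter> ?A) + 1 = card BT" using mA mZ rA rZ rU rT by linarith
  moreover have iBT: "BT - {b} \<in> indep M" using matroidD(4)[OF m B1, of "BT - {b}"] BT by blast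
  moreover have "card (BT - {b}) + 1 = card BT"
    using b finite_subset[OF BT(1) fB] card_Diff_singleton[of b BT] card_gt_0_iff[of BT] by auto
  ultimately have "rk M (?A \<inter> T) \<le> rk M (BT - {b})" using rk_indep[OF m iBT] by (simp add: Int_commute)
  moreover have "BT - {b} \<subseteq> ?A \<inter> T" using cl_ext[of "B1 - {b}" M] sB BT by auto
  moreover have "?A \<inter> T \<subseteq> gnd M" using cl_sub[of M "B1 - {b}"] by auto
  ultimately show ?thesis using rk_eq_sub_cl[OF m, of "BT - {b}" "?A \<inter> T"] by blast
qed

lemma rk_restr: "X \<subseteq> T \<Longrightarrow> rk (restr M T) X = rk M X"
  unfolding rk_def restr_indep by (rule arg_cong[where f=Max]) auto

lemma cl_restr: "X \<subseteq> T \<Longrightarrow> cl (restr M T) X = cl M X \<inter> T" if "T \<subseteq> gnd M"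
proof -
  assume X: "X \<subseteq> T"
  have "rk (restr M T) (insert e X) = rk M (insert e X)" if "e \<in> T" for e
    using rk_restr[of "insert e X" T M] that X by auto
  then show ?thesis unfolding cl_def restr_gnd using rk_restr[OF X] \<open>T \<subseteq> gnd M\<close> by auto
qed

lemma flat_restr:
  assumes T: "T \<subseteq> gnd M" and S: "flat M S" and ST: "S \<subseteq> T"
  shows "flat (restr M T) S"
  unfolding flat_def restr_gnd using cl_restr[OF T ST] flat_cl_eq[OF S] ST by auto

section \<open>Generalized parallel connection\<close>

locale gpc =
  fixes M1 M2 M :: "'a matroid" and T :: "'a set"
  assumes m1: "matroid M1" and m2: "matroid M2" and m: "matroid M"
    and gM: "gnd M = gnd M1 \<union> gnd M2"
    and TE: "T = gnd M1 \<inter> gnd M2"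
    and mod1: "modular_flat M1 T" and mod2: "modular_flat M2 T"
    and res: "restr M1 T = restr M2 T"
    and flats: "\<And>Z. flat M Z \<longleftrightarrow> Z \<subseteq> gnd M \<and> flat M1 (Z \<inter> gnd M1) \<and> flat M2 (Z \<inter> gnd M2)"
begin

lemma sym: "gpc M2 M1 M T"
  unfolding gpc_def using m1 m2 m gM TE mod1 mod2 res flats by (auto simp: Un_commute Int_commute)

lemma T1: "T \<subseteq> gnd M1" and T2: "T \<subseteq> gnd M2" using TE by auto
lemma Tf1: "flat M1 T" and Tf2: "flat M2 T" using modD_flat[OF mod1] modD_flat[OF mod2] by auto

lemma indep_T: "I \<subseteq> T \<Longrightarrow> I \<in> indep M1 \<longleftrightarrow> I \<in> indep M2"
proof -
  assume I: "I \<subseteq> T"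
  have "{I \<in> indep M1. I \<subseteq> T} = {I \<in> indep M2. I \<subseteq> T}" using res restr_indep by metis
  then show ?thesis using I by blast
qed

lemma rk_T: "X \<subseteq> T \<Longrightarrow> rk M1 X = rk M2 X"
  using rk_restr[of X T M1] rk_restr[of X T M2] res by simp

lemma cl_T: "X \<subseteq> T \<Longrightarrow> cl M1 X \<inter> T = cl M2 X \<inter> T"
  using cl_restr[OF T1, of X] cl_restr[OF T2, of X] res by simp

lemma flat21: assumes S: "flat M2 S" and ST: "S \<subseteq> T" shows "flat M1 S"
proof -
  have "cl M1 S \<subseteq> T" using cl_least[OF m1 Tf1 ST] .
  then have "cl M1 S = cl M1 S \<inter> T" by auto
  also have "\<dots> = cl M2 S \<inter> T" using cl_T[OF ST] .
  also have "\<dots> = S" using flat_cl_eq[OF S] ST by auto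
  finally show ?thesis unfolding flat_def using ST T1 by auto
qed

lemma flatT2: "flat M2 Z \<Longrightarrow> flat M1 (Z \<inter> T)"
  using flat21 flat_Int[OF m2 _ Tf2] by blast

lemma closure_formula:
  assumes W: "W \<subseteq> gnd M"
  defines "A \<equiv> cl M1 (W \<inter> gnd M1)"
  defines "B \<equiv> cl M2 ((W \<inter> gnd M2) \<union> (A \<inter> T))"
  defines "Z1 \<equiv> cl M1 ((W \<inter> gnd M1) \<union> (B \<inter> T))"
  shows "cl M W = Z1 \<union> B" "Z1 = cl M1 (A \<union> (B \<inter> T))" "Z1 \<inter> T = B \<inter> T" "A \<inter> T \<subseteq> B"
proof -
  have Af: "flat M1 A" unfolding A_def using flat_cl[OF m1] .
  have Bf: "flat M2 B" unfolding B_def using flat_cl[OF m2] .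
  have sB: "B \<subseteq> gnd M2" using flat_sub[OF Bf] .
  have sA: "A \<subseteq> gnd M1" using flat_sub[OF Af] .
  have ATB: "A \<inter> T \<subseteq> B" unfolding B_def using cl_ext[of "(W \<inter> gnd M2) \<union> (A \<inter> T)" M2] T2 by auto
  then show "A \<inter> T \<subseteq> B" .
  have BTf: "flat M1 (B \<inter> T)" using flatT2[OF Bf] .
  have Z1eq: "Z1 = cl M1 (A \<union> (B \<inter> T))" unfolding Z1_def A_def using cl_union_cl[OF m1] by simp
  then show "Z1 = cl M1 (A \<union> (B \<inter> T))" .
  have Z1T: "Z1 \<inter> T = B \<inter> T" using mod_cl[OF m1 mod1 Af BTf] ATB Z1eq by auto
  then show "Z1 \<inter> T = B \<inter> T" .
  have Z1f: "flat M1 Z1" unfolding Z1_def using flat_cl[OF m1] .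
  have sZ1: "Z1 \<subseteq> gnd M1" using flat_sub[OF Z1f] .
  have BE1: "B \<inter> gnd M1 = B \<inter> T" using sB TE by auto
  have Z1E2: "Z1 \<inter> gnd M2 = Z1 \<inter> T" using sZ1 TE by auto
  have e1: "(Z1 \<union> B) \<inter> gnd M1 = Z1" using BE1 Z1T sZ1 by auto
  have e2: "(Z1 \<union> B) \<inter> gnd M2 = B" using Z1E2 Z1T sB by auto
  have Zf: "flat M (Z1 \<union> B)" unfolding flats using e1 e2 Z1f Bf sZ1 sB gM by auto
  have WZ: "W \<subseteq> Z1 \<union> B"
  proof
    fix w assume w: "w \<in> W"
    then have "w \<in> gnd M1 \<or> w \<in> gnd M2" using W gM by auto
    then show "w \<in> Z1 \<union> B"
    proof
      assume "w \<in> gnd M1"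
      then have "w \<in> (W \<inter> gnd M1) \<union> (B \<inter> T)" using w by auto
      then show ?thesis unfolding Z1_def using cl_ext[of "(W \<inter> gnd M1) \<union> (B \<inter> T)" M1] T1 by auto
    next
      assume "w \<in> gnd M2"
      then have "w \<in> (W \<inter> gnd M2) \<union> (A \<inter> T)" using w by auto
      then show ?thesis unfolding B_def using cl_ext[of "(W \<inter> gnd M2) \<union> (A \<inter> T)" M2] T2 by auto
    qed
  qed
  have le: "cl M W \<subseteq> Z1 \<union> B" using cl_least[OF m Zf WZ] .
  let ?Z' = "cl M W"
  have Z'f: "flat M ?Z'" using flat_cl[OF m] .
  then have Z'1: "flat M1 (?Z' \<inter> gnd M1)" and Z'2: "flat M2 (?Z' \<inter> gnd M2)" using flats by auto
  have WZ': "W \<subseteq> ?Z'" using cl_ext[OF W] .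
  have "W \<inter> gnd M1 \<subseteq> ?Z' \<inter> gnd M1" using WZ' by auto
  then have "A \<subseteq> ?Z' \<inter> gnd M1" unfolding A_def by (rule cl_least[OF m1 Z'1])
  then have "A \<inter> T \<subseteq> ?Z' \<inter> gnd M2" using TE by auto
  then have "(W \<inter> gnd M2) \<union> (A \<inter> T) \<subseteq> ?Z' \<inter> gnd M2" using WZ' by auto
  then have "B \<subseteq> ?Z' \<inter> gnd M2" unfolding B_def by (rule cl_least[OF m2 Z'2])
  then have "B \<inter> T \<subseteq> ?Z' \<inter> gnd M1" using TE by auto
  then have "(W \<inter> gnd M1) \<union> (B \<inter> T) \<subseteq> ?Z' \<inter> gnd M1" using WZ' by auto
  then have "Z1 \<subseteq> ?Z' \<inter> gnd M1" unfolding Z1_def by (rule cl_least[OF m1 Z'1])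
  then have "Z1 \<union> B \<subseteq> ?Z'" using \<open>B \<subseteq> ?Z' \<inter> gnd M2\<close> by auto
  then show "cl M W = Z1 \<union> B" using le by auto
qed

lemma cl_E1: assumes X: "X \<subseteq> gnd M1" shows "cl M X = cl M1 X"
proof -
  have W: "X \<subseteq> gnd M" using X gM by auto
  let ?A = "cl M1 (X \<inter> gnd M1)"
  let ?B = "cl M2 ((X \<inter> gnd M2) \<union> (?A \<inter> T))"
  let ?Z1 = "cl M1 ((X \<inter> gnd M1) \<union> (?B \<inter> T))"
  note F = closure_formula[OF W]
  have A: "?A = cl M1 X" using X by (simp add: Int_absorb2)
  have Af: "flat M1 ?A" using flat_cl[OF m1] .
  have ATf1: "flat M1 (?A \<inter> T)" using flat_Int[OF m1 Af Tf1] .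
  have ATf2: "flat M2 (?A \<inter> T)" using gpc.flat21[OF sym ATf1] by auto
  have "X \<inter> gnd M2 \<subseteq> ?A \<inter> T" using cl_ext[of X M1] X TE A by auto
  then have "(X \<inter> gnd M2) \<union> (?A \<inter> T) = ?A \<inter> T" by auto
  then have B: "?B = ?A \<inter> T" using flat_cl_eq[OF ATf2] by simp
  have "?Z1 = cl M1 (?A \<union> (?B \<inter> T))" using F(2) .
  also have "?A \<union> (?B \<inter> T) = ?A" using B by auto
  also have "cl M1 ?A = ?A" using flat_cl_eq[OF Af] .
  finally have Z: "?Z1 = ?A" .
  have "cl M X = ?Z1 \<union> ?B" using F(1) .
  also have "\<dots> = ?A" using Z B by auto
  finally show ?thesis using A by simp
qed

lemma cl_E2: "X \<subseteq> gnd M2 \<Longrightarrow> cl M X = cl M2 X"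
  using gpc.cl_E1[OF sym] .

lemma indep_E1: assumes X: "I \<subseteq> gnd M1" shows "I \<in> indep M \<longleftrightarrow> I \<in> indep M1"
proof -
  have I: "I \<subseteq> gnd M" using X gM by auto
  have "\<And>x. cl M (I - {x}) = cl M1 (I - {x})"
  proof -
    fix x have "I - {x} \<subseteq> gnd M1" using X by auto
    then show "cl M (I - {x}) = cl M1 (I - {x})" by (rule cl_E1)
  qed
  then show ?thesis using indep_iff_cl[OF m I] indep_iff_cl[OF m1 X] by simp
qed

lemma indep_E2: "I \<subseteq> gnd M2 \<Longrightarrow> I \<in> indep M \<longleftrightarrow> I \<in> indep M2"
  using gpc.indep_E1[OF sym] .

lemma circuit_E1: assumes C: "C \<subseteq> gnd M1" shows "circuit M C \<longleftrightarrow> circuit M1 C"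
proof -
  have "\<And>D. D \<subseteq> C \<Longrightarrow> D \<in> indep M \<longleftrightarrow> D \<in> indep M1" using indep_E1 C by auto
  moreover have "C \<subseteq> gnd M" using C gM by auto
  ultimately show ?thesis unfolding circuit_def using C by auto
qed

lemma circuit_E2: "C \<subseteq> gnd M2 \<Longrightarrow> circuit M C \<longleftrightarrow> circuit M2 C"
  using gpc.circuit_E1[OF sym] .

lemma rk_E1: assumes X: "X \<subseteq> gnd M1" shows "rk M X = rk M1 X"
proof -
  have "{card I | I. I \<in> indep M \<and> I \<subseteq> X} = {card I | I. I \<in> indep M1 \<and> I \<subseteq> X}"
    using indep_E1 X by blast
  then show ?thesis unfolding rk_def by simp
qed

lemma rk_E2: "X \<subseteq> gnd M2 \<Longrightarrow> rk M X = rk M2 X"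
  using gpc.rk_E1[OF sym] .

lemma restr_E1: "X \<subseteq> gnd M1 \<Longrightarrow> restr M X = restr M1 X"
  unfolding restr_def using indep_E1 by auto

lemma restr_E2: "X \<subseteq> gnd M2 \<Longrightarrow> restr M X = restr M2 X"
  using gpc.restr_E1[OF sym] .

lemma E1_flat: "flat M (gnd M1)"
  unfolding flats using gM flat_gnd[OF m1] Tf2 TE by (auto simp: Int_absorb2)

lemma E2_flat: "flat M (gnd M2)"
  using gpc.E1_flat[OF sym] .

end

context gpc begin

lemma flat12: "flat M1 S \<Longrightarrow> S \<subseteq> T \<Longrightarrow> flat M2 S"
  using gpc.flat21[OF sym] .

lemma cl_bound:
  assumes W: "W \<subseteq> gnd M" and P1: "flat M1 P1" and P2: "flat M2 P2"
    and W1: "W \<inter> gnd M1 \<subseteq> P1" and W2: "W \<inter> gnd M2 \<subseteq> P2"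
    and PT1: "P1 \<inter> T \<subseteq> P2" and PT2: "P2 \<inter> T \<subseteq> P1"
  shows "cl M W \<subseteq> P1 \<union> P2"
proof -
  have s1: "P1 \<subseteq> gnd M1" and s2: "P2 \<subseteq> gnd M2" using flat_sub[OF P1] flat_sub[OF P2] by auto
  have e1: "(P1 \<union> P2) \<inter> gnd M1 = P1" using s1 s2 PT2 TE by auto
  have e2: "(P1 \<union> P2) \<inter> gnd M2 = P2" using s1 s2 PT1 TE by auto
  have "flat M (P1 \<union> P2)" unfolding flats using e1 e2 P1 P2 s1 s2 gM by auto
  moreover have "W \<subseteq> P1 \<union> P2" using W W1 W2 gM by auto
  ultimately show ?thesis using cl_least[OF m] by blast
qed

lemma cl1_T_eq: "X \<subseteq> T \<Longrightarrow> cl M1 X \<inter> T = cl M2 X \<inter> T" by (rule cl_T)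

lemma rank_formula:
  assumes Z: "flat M Z"
  shows "rk M Z + rk M1 (Z \<inter> T) = rk M1 (Z \<inter> gnd M1) + rk M2 (Z \<inter> gnd M2)"
proof -
  define Z1 where "Z1 = Z \<inter> gnd M1"
  define Z2 where "Z2 = Z \<inter> gnd M2"
  define ZT where "ZT = Z \<inter> T"
  have sZ: "Z \<subseteq> gnd M" using flat_sub[OF Z] .
  have Z1f: "flat M1 Z1" and Z2f: "flat M2 Z2" using Z flats Z1_def Z2_def by auto
  have Z1T: "Z1 \<inter> T = ZT" and Z2T: "Z2 \<inter> T = ZT" unfolding Z1_def Z2_def ZT_def using TE by auto
  have ZTT: "ZT \<subseteq> T" unfolding ZT_def by auto
  obtain BT where BT: "BT \<subseteq> ZT" "BT \<in> indep M1" "card BT = rk M1 ZT" using rk_basis[OF m1] by blast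
  have BTT: "BT \<subseteq> T" using BT ZTT by auto
  have BT2: "BT \<in> indep M2" using indep_T[OF BTT] BT by simp
  have rZT: "rk M2 ZT = rk M1 ZT" using rk_T[OF ZTT] by simp
  obtain B1 where B1: "BT \<subseteq> B1" "B1 \<subseteq> Z1" "B1 \<in> indep M1" "card B1 = rk M1 Z1"
    using rk_extend[OF m1 BT(2), of Z1] BT Z1T by blast
  obtain B2 where B2: "BT \<subseteq> B2" "B2 \<subseteq> Z2" "B2 \<in> indep M2" "card B2 = rk M2 Z2"
    using rk_extend[OF m2 BT2, of Z2] BT Z2T by blast
  have fin: "finite B1" "finite B2" "finite BT" using indep_finite[OF m1 B1(3)] indep_finite[OF m2 B2(3)] indep_finite[OF m1 BT(2)] by auto
  have B1T: "B1 \<inter> T = BT"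
  proof -
    have "B1 \<inter> T \<in> indep M1" using matroidD(4)[OF m1 B1(3), of "B1 \<inter> T"] by blast
    moreover have "B1 \<inter> T \<subseteq> ZT" using B1 Z1T by auto
    ultimately have "card (B1 \<inter> T) \<le> card BT" using rk_ge[OF m1, of "B1 \<inter> T" ZT] BT by simp
    moreover have "BT \<subseteq> B1 \<inter> T" using B1 BTT by auto
    ultimately show ?thesis using card_seteq[of "B1 \<inter> T" BT] fin by auto
  qed
  have B2T: "B2 \<inter> T = BT"
  proof -
    have "B2 \<inter> T \<in> indep M2" using matroidD(4)[OF m2 B2(3), of "B2 \<inter> T"] by blast
    moreover have "B2 \<inter> T \<subseteq> ZT" using B2 Z2T by auto
    ultimately have "card (B2 \<inter> T) \<le> card BT" using rk_ge[OF m2, of "B2 \<inter> T" ZT] BT rZT by simp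
    moreover have "BT \<subseteq> B2 \<inter> T" using B2 BTT by auto
    ultimately show ?thesis using card_seteq[of "B2 \<inter> T" BT] fin by auto
  qed
  have sB1: "B1 \<subseteq> gnd M1" and sB2: "B2 \<subseteq> gnd M2" using matroidD(2)[OF m1 B1(3)] matroidD(2)[OF m2 B2(3)] by auto
  have B12: "B1 \<inter> B2 = BT" using B1T B2T sB1 sB2 TE by auto
  have sZ1: "Z1 \<subseteq> gnd M1" and sZ2: "Z2 \<subseteq> gnd M2" using flat_sub[OF Z1f] flat_sub[OF Z2f] by auto
  have cl1: "cl M1 B1 = Z1"
    using basis_cl[OF m1 B1(2) sZ1 B1(3,4)] cl_least[OF m1 Z1f B1(2)] by auto
  have cl2: "cl M2 B2 = Z2"
    using basis_cl[OF m2 B2(2) sZ2 B2(3,4)] cl_least[OF m2 Z2f B2(2)] by auto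
  have ZTsub: "ZT \<subseteq> gnd M1" "ZT \<subseteq> gnd M2" using ZTT T1 T2 by auto
  have ZTc1: "ZT \<subseteq> cl M1 BT" using basis_cl[OF m1 BT(1) ZTsub(1) BT(2,3)] .
  have ZTc2: "ZT \<subseteq> cl M2 BT" using basis_cl[OF m2 BT(1) ZTsub(2) BT2] BT(3) rZT by simp
  let ?B = "B1 \<union> B2"
  have sB: "?B \<subseteq> gnd M" using sB1 sB2 gM by auto
  have indB: "?B \<in> indep M"
    unfolding indep_iff_cl[OF m sB]
  proof
    fix b assume b: "b \<in> ?B"
    let ?W = "?B - {b}"
    have sW: "?W \<subseteq> gnd M" using sB by auto
    have bT: "b \<in> T \<Longrightarrow> b \<in> BT" using b B1T B2T by auto
    have iB1b: "B1 - {b} \<in> indep M1" using matroidD(4)[OF m1 B1(3)] by blast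
    have iB2b: "B2 - {b} \<in> indep M2" using matroidD(4)[OF m2 B2(3)] by blast
    have fl1: "flat M1 (cl M1 X)" and fl2: "flat M2 (cl M2 X)" for X using flat_cl[OF m1] flat_cl[OF m2] by auto
    consider (c1) "b \<in> B1" "b \<notin> T" | (c2) "b \<in> B2" "b \<notin> T" | (c3) "b \<in> BT" using b bT by auto
    then show "b \<notin> cl M ?W"
    proof cases
      case c1
      have bE2: "b \<notin> gnd M2" using c1 sB1 TE by auto
      have nb: "b \<notin> cl M1 (B1 - {b})" using indep_iff_cl[OF m1 sB1] B1(3) c1 by auto
      have BTb: "BT \<subseteq> B1 - {b}" using B1 c1 BTT by auto
      have "cl M ?W \<subseteq> cl M1 (B1 - {b}) \<union> Z2"
      proof (rule cl_bound[OF sW fl1 Z2f])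
        show "?W \<inter> gnd M1 \<subseteq> cl M1 (B1 - {b})"
        proof -
          have "?W \<inter> gnd M1 \<subseteq> B1 - {b}" using B2T BTb sB2 TE by auto
          then show ?thesis using cl_ext[of "B1 - {b}" M1] sB1 by auto
        qed
        show "?W \<inter> gnd M2 \<subseteq> Z2" using B2 B1T sB1 TE BTT by auto
        show "cl M1 (B1 - {b}) \<inter> T \<subseteq> Z2"
          using cl_mono[OF m1, of "B1 - {b}" B1] cl1 Z1T Z2T by auto
        show "Z2 \<inter> T \<subseteq> cl M1 (B1 - {b})"
          using Z2T ZTc1 cl_mono[OF m1 BTb] by auto
      qed
      then show ?thesis using nb bE2 flat_sub[OF Z2f] by auto
    next
      case c2
      have bE1: "b \<notin> gnd M1" using c2 sB2 TE by auto
      have nb: "b \<notin> cl M2 (B2 - {b})" using indep_iff_cl[OF m2 sB2] B2(3) c2 by auto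
      have BTb: "BT \<subseteq> B2 - {b}" using B2 c2 BTT by auto
      have "cl M ?W \<subseteq> Z1 \<union> cl M2 (B2 - {b})"
      proof (rule cl_bound[OF sW Z1f fl2])
        show "?W \<inter> gnd M2 \<subseteq> cl M2 (B2 - {b})"
        proof -
          have "?W \<inter> gnd M2 \<subseteq> B2 - {b}" using B1T BTb sB1 TE by auto
          then show ?thesis using cl_ext[of "B2 - {b}" M2] sB2 by auto
        qed
        show "?W \<inter> gnd M1 \<subseteq> Z1" using B1 B2T sB2 TE BTT by auto
        show "cl M2 (B2 - {b}) \<inter> T \<subseteq> Z1"
          using cl_mono[OF m2, of "B2 - {b}" B2] cl2 Z1T Z2T by auto
        show "Z1 \<inter> T \<subseteq> cl M2 (B2 - {b})"
          using Z1T ZTc2 cl_mono[OF m2 BTb] by auto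
      qed
      then show ?thesis using nb bE1 flat_sub[OF Z1f] by auto
    next
      case c3
      have nb1: "b \<notin> cl M1 (B1 - {b})" using indep_iff_cl[OF m1 sB1] B1(3) c3 B1(1) by auto
      have nb2: "b \<notin> cl M2 (B2 - {b})" using indep_iff_cl[OF m2 sB2] B2(3) c3 B2(1) by auto
      have cardT1: "card BT = rk M1 (cl M1 B1 \<inter> T)" using cl1 Z1T BT by simp
      have cardT2: "card BT = rk M2 (cl M2 B2 \<inter> T)" using cl2 Z2T BT rZT by simp
      have d1: "cl M1 (B1 - {b}) \<inter> T \<subseteq> cl M1 (BT - {b})"
        using drop_lemma[OF m1 mod1 B1(3) B1(1) BTT cardT1 c3] .
      have d2: "cl M2 (B2 - {b}) \<inter> T \<subseteq> cl M2 (BT - {b})"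
        using drop_lemma[OF m2 mod2 B2(3) B2(1) BTT cardT2 c3] .
      have BTbT: "BT - {b} \<subseteq> T" using BTT by auto
      have ct: "cl M1 (BT - {b}) \<inter> T = cl M2 (BT - {b}) \<inter> T" using cl_T[OF BTbT] .
      have m1b: "cl M1 (BT - {b}) \<subseteq> cl M1 (B1 - {b})" using cl_mono[OF m1, of "BT - {b}" "B1 - {b}"] B1(1) by auto
      have m2b: "cl M2 (BT - {b}) \<subseteq> cl M2 (B2 - {b})" using cl_mono[OF m2, of "BT - {b}" "B2 - {b}"] B2(1) by auto
      have "cl M ?W \<subseteq> cl M1 (B1 - {b}) \<union> cl M2 (B2 - {b})"
      proof (rule cl_bound[OF sW fl1 fl2])
        show "?W \<inter> gnd M1 \<subseteq> cl M1 (B1 - {b})"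
        proof -
          have "?W \<inter> gnd M1 \<subseteq> B1 - {b}" using B2T B1 sB2 TE by auto
          then show ?thesis using cl_ext[of "B1 - {b}" M1] sB1 by auto
        qed
        show "?W \<inter> gnd M2 \<subseteq> cl M2 (B2 - {b})"
        proof -
          have "?W \<inter> gnd M2 \<subseteq> B2 - {b}" using B1T B2 sB1 TE by auto
          then show ?thesis using cl_ext[of "B2 - {b}" M2] sB2 by auto
        qed
        show "cl M1 (B1 - {b}) \<inter> T \<subseteq> cl M2 (B2 - {b})" using d1 ct m2b by auto
        show "cl M2 (B2 - {b}) \<inter> T \<subseteq> cl M1 (B1 - {b})" using d2 ct m1b by auto
      qed
      then show ?thesis using nb1 nb2 by auto
    qed
  qed
  have "card ?B \<le> rk M Z" using rk_ge[OF m indB] B1 B2 Z1_def Z2_def by auto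
  moreover have "Z \<subseteq> cl M ?B"
  proof -
    have "cl M B1 = Z1" using cl_E1[OF sB1] cl1 by simp
    moreover have "cl M B2 = Z2" using cl_E2[OF sB2] cl2 by simp
    moreover have "cl M B1 \<subseteq> cl M ?B" "cl M B2 \<subseteq> cl M ?B" using cl_mono[OF m, of B1 ?B] cl_mono[OF m, of B2 ?B] by auto
    moreover have "Z = Z1 \<union> Z2" using sZ gM Z1_def Z2_def by auto
    ultimately show ?thesis by auto
  qed
  then have "rk M Z \<le> card ?B"
    using rk_mono[OF m, of Z "cl M ?B"] rk_cl[OF m, of ?B] rk_indep[OF m indB] by simp
  ultimately have "rk M Z = card ?B" by simp
  moreover have "card ?B + card BT = card B1 + card B2" using card_Un_Int[OF fin(1,2)] B12 by simp
  ultimately show ?thesis using B1(4) B2(4) BT(3) Z1_def Z2_def ZT_def by simp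
qed

end

context gpc begin

lemma mod_pres1:
  assumes F: "modular_flat M1 F"
  shows "modular_flat M F"
proof -
  have Ff1: "flat M1 F" using modD_flat[OF F] .
  have sF: "F \<subseteq> gnd M1" using flat_sub[OF Ff1] .
  have FT1: "flat M1 (F \<inter> T)" using flat_Int[OF m1 Ff1 Tf1] .
  have FT2: "flat M2 (F \<inter> T)" using flat12[OF FT1] by auto
  have FE2: "F \<inter> gnd M2 = F \<inter> T" using sF TE by auto
  have FE1: "F \<inter> gnd M1 = F" using sF by auto
  have FfM: "flat M F" unfolding flats using FE1 FE2 Ff1 FT2 sF gM by auto
  have "rk M F + rk M Y = rk M (F \<union> Y) + rk M (F \<inter> Y)" if Y: "flat M Y" for Y
  proof -
    define Y1 where "Y1 = Y \<inter> gnd M1"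
    define Y2 where "Y2 = Y \<inter> gnd M2"
    have Y1f: "flat M1 Y1" and Y2f: "flat M2 Y2" using Y flats Y1_def Y2_def by auto
    have sY: "Y \<subseteq> gnd M" using flat_sub[OF Y] .
    define A where "A = cl M1 (F \<union> Y1)"
    define P2 where "P2 = cl M2 (Y2 \<union> (A \<inter> T))"
    have Af: "flat M1 A" unfolding A_def using flat_cl[OF m1] .
    have sA: "A \<subseteq> gnd M1" using flat_sub[OF Af] .
    have ATf1: "flat M1 (A \<inter> T)" using flat_Int[OF m1 Af Tf1] .
    have ATf2: "flat M2 (A \<inter> T)" using flat12[OF ATf1] by auto
    have P2f: "flat M2 P2" unfolding P2_def using flat_cl[OF m2] .
    have sP2: "P2 \<subseteq> gnd M2" using flat_sub[OF P2f] .
    have sY1: "Y1 \<subseteq> gnd M1" and sY2: "Y2 \<subseteq> gnd M2" using Y1_def Y2_def by auto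
    have FY1A: "F \<union> Y1 \<subseteq> A" unfolding A_def using cl_ext[of "F \<union> Y1" M1] sF sY1 by auto
    have Y2T: "Y2 \<inter> T = Y \<inter> T" unfolding Y2_def using TE by auto
    have Y2TA: "Y2 \<inter> T \<subseteq> A \<inter> T" using Y2T FY1A Y1_def TE by auto
    have P2T: "cl M2 (Y2 \<union> (A \<inter> T)) \<inter> T = A \<inter> T"
      using mod_cl[OF m2 mod2 Y2f ATf2 Y2TA] by auto
    then have P2T': "P2 \<inter> T = A \<inter> T" unfolding P2_def .
    have sub2: "Y2 \<union> (A \<inter> T) \<subseteq> P2" unfolding P2_def using cl_ext[of "Y2 \<union> (A \<inter> T)" M2] sY2 T2 by auto
    let ?G = "cl M (F \<union> Y)"
    have W: "F \<union> Y \<subseteq> gnd M" using sF sY gM by auto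
    have G1: "?G \<subseteq> A \<union> P2"
    proof (rule cl_bound[OF W Af P2f])
      show "(F \<union> Y) \<inter> gnd M1 \<subseteq> A" using FY1A sF Y1_def by auto
      show "(F \<union> Y) \<inter> gnd M2 \<subseteq> P2" using sub2 FE2 Y2_def FY1A by auto
      show "A \<inter> T \<subseteq> P2" using sub2 by auto
      show "P2 \<inter> T \<subseteq> A" using P2T' by auto
    qed
    have Gf: "flat M ?G" using flat_cl[OF m] .
    have G1f: "flat M1 (?G \<inter> gnd M1)" and G2f: "flat M2 (?G \<inter> gnd M2)" using Gf flats by auto
    have WG: "F \<union> Y \<subseteq> ?G" using cl_ext[OF W] .
    have "F \<union> Y1 \<subseteq> ?G \<inter> gnd M1" using WG sF Y1_def by auto
    then have AG: "A \<subseteq> ?G \<inter> gnd M1" unfolding A_def by (rule cl_least[OF m1 G1f])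
    have "Y2 \<union> (A \<inter> T) \<subseteq> ?G \<inter> gnd M2" using WG Y2_def AG TE by auto
    then have PG: "P2 \<subseteq> ?G \<inter> gnd M2" unfolding P2_def by (rule cl_least[OF m2 G2f])
    have Geq: "?G = A \<union> P2" using G1 AG PG by auto
    have GE1: "?G \<inter> gnd M1 = A" using Geq sA sP2 P2T' TE by auto
    have GE2: "?G \<inter> gnd M2 = P2" using Geq sA sP2 P2T' TE by auto
    have GT: "?G \<inter> T = A \<inter> T" using GE1 T1 by auto
    have rfG: "rk M ?G + rk M1 (A \<inter> T) = rk M1 A + rk M2 P2" using rank_formula[OF Gf] GE1 GE2 GT by simp
    have rfY: "rk M Y + rk M1 (Y \<inter> T) = rk M1 Y1 + rk M2 Y2" using rank_formula[OF Y] Y1_def Y2_def by simp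
    have mP2: "rk M2 T + rk M2 P2 = rk M2 (T \<union> P2) + rk M2 (T \<inter> P2)" using modD[OF mod2 P2f] .
    have mY2: "rk M2 T + rk M2 Y2 = rk M2 (T \<union> Y2) + rk M2 (T \<inter> Y2)" using modD[OF mod2 Y2f] .
    have "rk M2 (T \<union> P2) = rk M2 (cl M2 (Y2 \<union> (A \<inter> T)) \<union> T)" unfolding P2_def by (simp add: Un_commute)
    also have "\<dots> = rk M2 ((Y2 \<union> (A \<inter> T)) \<union> T)" using rk_union_cl[OF m2] .
    also have "(Y2 \<union> (A \<inter> T)) \<union> T = T \<union> Y2" by auto
    finally have u: "rk M2 (T \<union> P2) = rk M2 (T \<union> Y2)" .
    have i1: "rk M2 (T \<inter> P2) = rk M1 (A \<inter> T)" using P2T' rk_T[of "A \<inter> T"] by (simp add: Int_commute)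
    have i2: "rk M2 (T \<inter> Y2) = rk M1 (Y \<inter> T)" using Y2T rk_T[of "Y \<inter> T"] by (simp add: Int_commute)
    have mF: "rk M1 F + rk M1 Y1 = rk M1 (F \<union> Y1) + rk M1 (F \<inter> Y1)" using modD[OF F Y1f] .
    have rF: "rk M F = rk M1 F" using rk_E1[OF sF] .
    have FY: "F \<inter> Y = F \<inter> Y1" using sF Y1_def by auto
    have rFY: "rk M (F \<inter> Y) = rk M1 (F \<inter> Y1)" using rk_E1[of "F \<inter> Y1"] sF FY by auto
    have rG: "rk M (F \<union> Y) = rk M ?G" using rk_cl[OF m] by simp
    have rA: "rk M1 A = rk M1 (F \<union> Y1)" unfolding A_def using rk_cl[OF m1] .
    show ?thesis using rfG rfY mP2 mY2 u i1 i2 mF rF rFY rG rA by linarith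
  qed
  then show ?thesis unfolding modular_flat_def using FfM by blast
qed

lemma mod_pres2: "modular_flat M2 F \<Longrightarrow> modular_flat M F"
  using gpc.mod_pres1[OF sym] .

lemma QQ:
  assumes Q1: "\<And>S. S \<subseteq> gnd M1 \<Longrightarrow> binary_pg (restr M1 S) \<Longrightarrow> modular_flat M1 S"
    and Q2: "\<And>S. S \<subseteq> gnd M2 \<Longrightarrow> binary_pg (restr M2 S) \<Longrightarrow> modular_flat M2 S"
    and S: "S \<subseteq> gnd M" and B: "binary_pg (restr M S)"
  shows "modular_flat M S"
proof (cases "S \<subseteq> gnd M1")
  case True
  then show ?thesis using restr_E1[OF True] B Q1 mod_pres1 by auto
next
  case n1: False
  show ?thesis
  proof (cases "S \<subseteq> gnd M2")
    case True
    then show ?thesis using restr_E2[OF True] B Q2 mod_pres2 by auto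
  next
    case n2: False
    obtain y where y: "y \<in> S" "y \<notin> gnd M1" using n1 by blast
    obtain x where x: "x \<in> S" "x \<notin> gnd M2" using n2 by blast
    have xE1: "x \<in> gnd M1" using x S gM by auto
    have xy: "x \<noteq> y" using xE1 y by auto
    obtain z where z: "z \<in> S" "z \<noteq> x" "z \<noteq> y" "circuit (restr M S) {x, y, z}"
      using bpg_tri[OF B, of x y] x(1) y(1) xy unfolding restr_gnd by blast
    have cM: "circuit M {x, y, z}" using restr_circuit[OF S z(4)] .
    have zE: "z \<in> gnd M1 \<or> z \<in> gnd M2" using z S gM by auto
    then show ?thesis
    proof
      assume zE1: "z \<in> gnd M1"
      have "y \<in> cl M ({x, y, z} - {y})" using circuit_in_cl[OF m cM, of y] by blast
      moreover have "{x, y, z} - {y} \<subseteq> gnd M1" using xE1 zE1 by auto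
      ultimately have "y \<in> gnd M1" using cl_least[OF m E1_flat] flat_sub[OF E1_flat] by blast
      then show ?thesis using y by simp
    next
      assume zE2: "z \<in> gnd M2"
      have yE2: "y \<in> gnd M2" using y S gM by auto
      have "x \<in> cl M ({x, y, z} - {x})" using circuit_in_cl[OF m cM, of x] by blast
      moreover have "{x, y, z} - {x} \<subseteq> gnd M2" using yE2 zE2 by auto
      ultimately have "x \<in> gnd M2" using cl_least[OF m E2_flat] flat_sub[OF E2_flat] by blast
      then show ?thesis using x by simp
    qed
  qed
qed

end

context gpc begin

lemma crossing:
  assumes simp: "simple M"
    and Nadd: "\<And>S Y. flat M1 S \<Longrightarrow> flat M1 Y \<Longrightarrow> S \<subseteq> T \<Longrightarrow> Y \<subseteq> T \<Longrightarrow> S \<inter> Y = {} \<Longrightarrow>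
                 rk M1 (S \<union> Y) = rk M1 S + rk M1 Y"
    and C: "circuit M C" and n1: "\<not> C \<subseteq> gnd M1" and n2: "\<not> C \<subseteq> gnd M2"
  shows "\<exists>C1 C2 e. circuit M C1 \<and> circuit M C2 \<and> C1 \<inter> C2 = {e} \<and> C = C1 \<union> C2 - {e}"
proof -
  have sC: "C \<subseteq> gnd M" using circuitD(1)[OF C] .
  define X1 where "X1 = C - gnd M2"
  define X2 where "X2 = C \<inter> gnd M2"
  obtain c0 where c0: "c0 \<in> C" "c0 \<notin> gnd M1" using n1 by blast
  obtain x0 where x0: "x0 \<in> C" "x0 \<notin> gnd M2" using n2 by blast
  have sX1: "X1 \<subseteq> gnd M1" using sC gM X1_def by auto
  have sX2: "X2 \<subseteq> gnd M2" using X2_def by auto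
  have c0X1: "c0 \<notin> X1" using c0 sX1 by auto
  have x0X1: "x0 \<in> X1" using x0 X1_def by auto
  have x0X2: "x0 \<notin> X2" using x0 X2_def by auto
  have CX: "C = X1 \<union> X2" using X1_def X2_def by auto
  have dX: "X1 \<inter> X2 = {}" using X1_def X2_def by auto
  have "X1 \<subset> C" using c0 c0X1 X1_def by auto
  then have "X1 \<in> indep M" using circuitD(3)[OF C] by blast
  then have iX1: "X1 \<in> indep M1" using indep_E1[OF sX1] by simp
  have "X2 \<subset> C" using x0 x0X2 X2_def by auto
  then have "X2 \<in> indep M" using circuitD(3)[OF C] by blast
  then have iX2: "X2 \<in> indep M2" using indep_E2[OF sX2] by simp
  have fX1: "finite X1" using indep_finite[OF m1 iX1] .
  have step1: "\<exists>e. e \<in> T \<and> e \<in> cl M1 X1 \<and> e \<in> cl M2 X2"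
  proof (rule ccontr)
    assume H: "\<not> (\<exists>e. e \<in> T \<and> e \<in> cl M1 X1 \<and> e \<in> cl M2 X2)"
    define F where "F = cl M1 X1"
    define Y where "Y = cl M2 X2 \<inter> T"
    have Ff: "flat M1 F" unfolding F_def using flat_cl[OF m1] .
    have cX2f: "flat M2 (cl M2 X2)" using flat_cl[OF m2] .
    have Yf2: "flat M2 Y" unfolding Y_def using flat_Int[OF m2 cX2f Tf2] .
    have YT: "Y \<subseteq> T" unfolding Y_def by auto
    have Yf1: "flat M1 Y" using flat21[OF Yf2 YT] .
    have FTf: "flat M1 (F \<inter> T)" using flat_Int[OF m1 Ff Tf1] .
    have disj: "(F \<inter> T) \<inter> Y = {}" using H F_def Y_def by auto
    have add: "rk M1 ((F \<inter> T) \<union> Y) = rk M1 (F \<inter> T) + rk M1 Y"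
      using Nadd[OF FTf Yf1 _ YT disj] by auto
    have inc: "rk M1 (F \<union> Y) + rk M1 (F \<inter> T) = rk M1 F + rk M1 ((F \<inter> T) \<union> Y)"
      using mod_incr[OF m1 mod1 Ff YT] .
    have rF: "rk M1 F = card X1" unfolding F_def using rk_cl[OF m1] rk_indep[OF m1 iX1] by simp
    have rXY: "rk M1 (X1 \<union> Y) = rk M1 (F \<union> Y)" unfolding F_def using rk_union_cl[OF m1] by simp
    have big: "rk M1 (X1 \<union> Y) = card X1 + rk M1 Y" using add inc rF rXY by linarith
    define P1 where "P1 = cl M1 ((X1 - {x0}) \<union> Y)"
    define P2 where "P2 = cl M2 (X2 \<union> (P1 \<inter> T))"
    have P1f: "flat M1 P1" unfolding P1_def using flat_cl[OF m1] .
    have P2f: "flat M2 P2" unfolding P2_def using flat_cl[OF m2] .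
    have P1Tf1: "flat M1 (P1 \<inter> T)" using flat_Int[OF m1 P1f Tf1] .
    have P1Tf2: "flat M2 (P1 \<inter> T)" using flat12[OF P1Tf1] by auto
    have sXY: "(X1 - {x0}) \<union> Y \<subseteq> gnd M1" using sX1 YT T1 by auto
    have XYP1: "(X1 - {x0}) \<union> Y \<subseteq> P1" unfolding P1_def using cl_ext[OF sXY] .
    have sXP: "X2 \<union> (P1 \<inter> T) \<subseteq> gnd M2" using sX2 T2 by auto
    have XP2: "X2 \<union> (P1 \<inter> T) \<subseteq> P2" unfolding P2_def using cl_ext[OF sXP] .
    have YP1T: "cl M2 X2 \<inter> T \<subseteq> P1 \<inter> T" using XYP1 Y_def by auto
    have "cl M2 (cl M2 X2 \<union> (P1 \<inter> T)) \<inter> T = P1 \<inter> T"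
      using mod_cl[OF m2 mod2 cX2f P1Tf2 YP1T] by auto
    then have P2T: "P2 \<inter> T = P1 \<inter> T" unfolding P2_def using cl_union_cl[OF m2] by simp
    have W: "C - {x0} \<subseteq> gnd M" using sC by auto
    have CT: "C \<inter> T \<subseteq> Y"
    proof -
      have "C \<inter> T \<subseteq> X2" using X2_def T2 by auto
      then show ?thesis unfolding Y_def using cl_ext[OF sX2] by auto
    qed
    have "cl M (C - {x0}) \<subseteq> P1 \<union> P2"
    proof (rule cl_bound[OF W P1f P2f])
      show "(C - {x0}) \<inter> gnd M1 \<subseteq> P1"
      proof -
        have "(C - {x0}) \<inter> gnd M1 \<subseteq> (X1 - {x0}) \<union> (C \<inter> T)" using X1_def TE by auto
        then show ?thesis using CT XYP1 by auto
      qed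
      show "(C - {x0}) \<inter> gnd M2 \<subseteq> P2" using XP2 X2_def by auto
      show "P1 \<inter> T \<subseteq> P2" using XP2 by auto
      show "P2 \<inter> T \<subseteq> P1" using P2T by auto
    qed
    moreover have "x0 \<in> cl M (C - {x0})" using circuit_in_cl[OF m C x0(1)] .
    moreover have "x0 \<notin> P2" using flat_sub[OF P2f] x0 by auto
    ultimately have "x0 \<in> P1" by auto
    then have r0: "rk M1 (insert x0 ((X1 - {x0}) \<union> Y)) = rk M1 ((X1 - {x0}) \<union> Y)"
      unfolding P1_def mem_cl by simp
    have "insert x0 ((X1 - {x0}) \<union> Y) = X1 \<union> Y" using x0X1 by auto
    then have "rk M1 (X1 \<union> Y) = rk M1 ((X1 - {x0}) \<union> Y)" using r0 by simp
    moreover have "rk M1 ((X1 - {x0}) \<union> Y) \<le> rk M1 (X1 - {x0}) + rk M1 Y" using rk_subadd[OF m1] .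
    moreover have "rk M1 (X1 - {x0}) + 1 = card X1"
    proof -
      have "X1 - {x0} \<in> indep M1" using matroidD(4)[OF m1 iX1] by blast
      then have "rk M1 (X1 - {x0}) = card (X1 - {x0})" using rk_indep[OF m1] by blast
      moreover have "card (X1 - {x0}) + 1 = card X1" using fX1 x0X1 card_Diff_singleton[of x0 X1] card_gt_0_iff[of X1] by auto
      ultimately show ?thesis by simp
    qed
    ultimately show False using big by linarith
  qed
  then obtain e where e: "e \<in> T" "e \<in> cl M1 X1" "e \<in> cl M2 X2" by blast
  have eE1: "e \<in> gnd M1" and eE2: "e \<in> gnd M2" using e T1 T2 by auto
  have eX1: "e \<notin> X1" using eE2 X1_def by auto
  have dep1: "insert e X1 \<notin> indep M1" using indep_insert_iff[OF m1 iX1 eE1 eX1] e(2) by simp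
  have eC: "e \<notin> C"
  proof
    assume eC: "e \<in> C"
    have "insert e X1 \<subseteq> C" using eC X1_def by auto
    moreover have "c0 \<notin> insert e X1" using c0X1 c0 eE1 by auto
    ultimately have "insert e X1 \<subset> C" using c0 by auto
    then have "insert e X1 \<in> indep M" using circuitD(3)[OF C] by blast
    then show False using dep1 indep_E1[of "insert e X1"] sX1 eE1 by auto
  qed
  have eX2: "e \<notin> X2" using eC X2_def by auto
  have dep2: "insert e X2 \<notin> indep M2" using indep_insert_iff[OF m2 iX2 eE2 eX2] e(3) by simp
  have s1: "insert e X1 \<subseteq> gnd M1" using sX1 eE1 by auto
  have s2: "insert e X2 \<subseteq> gnd M2" using sX2 eE2 by auto
  obtain C1 where C1: "C1 \<subseteq> insert e X1" "circuit M1 C1" using dep_has_circuit[OF m1 s1 dep1] by blast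
  obtain C2 where C2: "C2 \<subseteq> insert e X2" "circuit M2 C2" using dep_has_circuit[OF m2 s2 dep2] by blast
  have eC1: "e \<in> C1"
  proof (rule ccontr)
    assume "e \<notin> C1"
    then have "C1 \<subseteq> X1" using C1 by auto
    then have "C1 \<in> indep M1" using matroidD(4)[OF m1 iX1] by blast
    then show False using circuitD(2)[OF C1(2)] by simp
  qed
  have eC2: "e \<in> C2"
  proof (rule ccontr)
    assume "e \<notin> C2"
    then have "C2 \<subseteq> X2" using C2 by auto
    then have "C2 \<in> indep M2" using matroidD(4)[OF m2 iX2] by blast
    then show False using circuitD(2)[OF C2(2)] by simp
  qed
  have sC1: "C1 \<subseteq> gnd M1" and sC2: "C2 \<subseteq> gnd M2" using C1 C2 s1 s2 by auto
  have c1: "circuit M C1" using circuit_E1[OF sC1] C1 by simp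
  have c2: "circuit M C2" using circuit_E2[OF sC2] C2 by simp
  have ne: "C1 \<noteq> C2"
  proof
    assume eq: "C1 = C2"
    then have "C1 \<subseteq> {e}" using C1 C2 dX by auto
    then have "card C1 \<le> 1" using card_mono[of "{e}" C1] by simp
    moreover have "card C1 \<ge> 3" using simp c1 unfolding simple_def by blast
    ultimately show False by simp
  qed
  obtain C3 where C3: "C3 \<subseteq> (C1 \<union> C2) - {e}" "circuit M C3" using circuit_elim[OF m c1 c2 ne, of e] eC1 eC2 by blast
  have "C3 \<subseteq> C" using C3 C1 C2 CX by auto
  then have "C3 = C" using circuit_sub_eq[OF C C3(2)] by simp
  then have Csub: "C \<subseteq> (C1 \<union> C2) - {e}" using C3 by simp
  have "X1 \<subseteq> C1" using Csub CX C2 dX eX1 by auto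
  then have C1eq: "C1 = insert e X1" using C1 eC1 by auto
  have "X2 \<subseteq> C2" using Csub CX C1 dX eX2 by auto
  then have C2eq: "C2 = insert e X2" using C2 eC2 by auto
  have "C1 \<inter> C2 = {e}" using C1eq C2eq dX by auto
  moreover have "C = C1 \<union> C2 - {e}" using C1eq C2eq CX eX1 eX2 by auto
  ultimately show ?thesis using c1 c2 by blast
qed

lemma chordal_gpc:
  assumes simp: "simple M"
    and Nadd: "\<And>S Y. flat M1 S \<Longrightarrow> flat M1 Y \<Longrightarrow> S \<subseteq> T \<Longrightarrow> Y \<subseteq> T \<Longrightarrow> S \<inter> Y = {} \<Longrightarrow>
                 rk M1 (S \<union> Y) = rk M1 S + rk M1 Y"
    and ch1: "chordal M1" and ch2: "chordal M2"
  shows "chordal M"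
  unfolding chordal_def
proof (intro allI impI)
  fix C assume H: "circuit M C \<and> 4 \<le> card C"
  then have C: "circuit M C" and c4: "4 \<le> card C" by auto
  show "\<exists>C1 C2 e. circuit M C1 \<and> circuit M C2 \<and> C1 \<inter> C2 = {e} \<and> C = C1 \<union> C2 - {e}"
  proof (cases "C \<subseteq> gnd M1")
    case True
    then have "circuit M1 C" using circuit_E1 C by simp
    then have "\<exists>C1 C2 e. circuit M1 C1 \<and> circuit M1 C2 \<and> C1 \<inter> C2 = {e} \<and> C = C1 \<union> C2 - {e}"
      using ch1 c4 unfolding chordal_def by blast
    then obtain C1 C2 e where P: "circuit M1 C1" "circuit M1 C2" "C1 \<inter> C2 = {e}" "C = C1 \<union> C2 - {e}"
      by (elim exE conjE)
    have "circuit M C1" "circuit M C2" using circuit_E1 circuitD(1) P(1,2) by blast+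
    then show ?thesis using P(3,4) by blast
  next
    case n1: False
    show ?thesis
    proof (cases "C \<subseteq> gnd M2")
      case True
      then have "circuit M2 C" using circuit_E2 C by simp
      then have "\<exists>C1 C2 e. circuit M2 C1 \<and> circuit M2 C2 \<and> C1 \<inter> C2 = {e} \<and> C = C1 \<union> C2 - {e}"
        using ch2 c4 unfolding chordal_def by blast
      then obtain C1 C2 e where P: "circuit M2 C1" "circuit M2 C2" "C1 \<inter> C2 = {e}" "C = C1 \<union> C2 - {e}"
        by (elim exE conjE)
      have "circuit M C1" "circuit M C2" using circuit_E2 circuitD(1) P(1,2) by blast+
      then show ?thesis using P(3,4) by blast
    next
      case n2: False
      show ?thesis using crossing[OF simp Nadd C n1 n2] by blast
    qed
  qed
qed

end

lemma main_induct:
  "gf2_chordal M \<Longrightarrow> matroid M \<and> (\<forall>S. S \<subseteq> gnd M \<and> binary_pg (restr M S) \<longrightarrow> modular_flat M S)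
     \<and> (simple M \<longrightarrow> chordal M)"
proof (induction rule: gf2_chordal.induct)
  case (base M)
  show ?case using bpg_matroid[OF base] bpg_Q[OF base] bpg_chordal[OF base] by blast
next
  case (glue M1 M2 N M)
  let ?T = "gnd N"
  have m1: "matroid M1" and m2: "matroid M2" using glue.IH by auto
  have Q1: "\<And>S. S \<subseteq> gnd M1 \<Longrightarrow> binary_pg (restr M1 S) \<Longrightarrow> modular_flat M1 S" using glue.IH(1) by blast
  have Q2: "\<And>S. S \<subseteq> gnd M2 \<Longrightarrow> binary_pg (restr M2 S) \<Longrightarrow> modular_flat M2 S" using glue.IH(2) by blast
  have ch1: "chordal M1" using glue.IH(1) glue.hyps(3) by blast
  have ch2: "chordal M2" using glue.IH(2) glue.hyps(4) by blast
  have TE: "?T = gnd M1 \<inter> gnd M2" using glue.hyps(6) by simp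
  have mod2: "modular_flat M2 ?T" using Q2[of ?T] TE glue.hyps(5,9) by simp
  have res: "restr M1 ?T = restr M2 ?T" using glue.hyps(8,9) by simp
  have gp: "matroid M" "gnd M = gnd M1 \<union> gnd M2"
    "\<And>Z. flat M Z \<longleftrightarrow> Z \<subseteq> gnd M \<and> flat M1 (Z \<inter> gnd M1) \<and> flat M2 (Z \<inter> gnd M2)"
    using glue.hyps(10) unfolding is_gpc_def by blast+
  interpret G: gpc M1 M2 M ?T
    using m1 m2 gp TE glue.hyps(7) mod2 res unfolding gpc_def by blast
  have mN: "matroid N" using bpg_matroid[OF glue.hyps(5)] .
  have Nadd: "rk M1 (S \<union> Y) = rk M1 S + rk M1 Y"
    if S: "flat M1 S" and Y: "flat M1 Y" and ST: "S \<subseteq> ?T" and YT: "Y \<subseteq> ?T" and d: "S \<inter> Y = {}" for S Y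
  proof -
    have NN: "N = restr M1 ?T" using glue.hyps(8) by simp
    have T1: "?T \<subseteq> gnd M1" using TE by auto
    have fS: "flat N S" using flat_restr[OF T1 S ST] NN by simp
    have fY: "flat N Y" using flat_restr[OF T1 Y YT] NN by simp
    have "modular_flat N S" using bpg_modular[OF glue.hyps(5) fS] .
    then have "rk N S + rk N Y = rk N (S \<union> Y) + rk N (S \<inter> Y)" using modD fY by blast
    then have "rk N S + rk N Y = rk N (S \<union> Y)" using d rk_empty[OF mN] by simp
    moreover have "rk N S = rk M1 S" "rk N Y = rk M1 Y" "rk N (S \<union> Y) = rk M1 (S \<union> Y)"
      using rk_restr[of _ ?T M1] NN ST YT by auto
    ultimately show ?thesis by simp
  qed
  have QM: "\<forall>S. S \<subseteq> gnd M \<and> binary_pg (restr M S) \<longrightarrow> modular_flat M S"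
    using G.QQ[OF Q1 Q2] by blast
  have "simple M \<longrightarrow> chordal M" using G.chordal_gpc[OF _ Nadd ch1 ch2] by blast
  then show ?case using gp(1) QM by blast
qed

theorem lemma3p9:
  fixes M :: "'a matroid"
  assumes "simple M" and "gf2_chordal M"
  shows "chordal M"
  using main_induct[OF assms(2)] assms(1) by blast

end
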